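(* Let $\Omega=[0,1]$, $n\ge1$, and let $p_1,\dots,p_{n+1}\in(0,1)$ be distinct. Let $q_n\in[0,1)$ be the fractional part of $-(p_1+\dots+p_n)$ and assume $p_{n+1}\neq q_n$. Let $I_{n+1}=\{x\in[0,1]: G_{\{p_1,\dots,p_{n+1}\}}0_\Omega(x)\neq G_{\{p_1,\dots,p_n\}}0_\Omega(x)\}$. Then $I_{n+1}=(0,q_n)$ if $p_{n+1}<q_n$, and $I_{n+1}=(q_n,1)$ if $p_{n+1}>q_n$. Consequently, if $p_1,\dots,p_{n+1}$ are independent random variables uniformly distributed on $(0,1)$, then the length of $I_{n+1}$ has probability density $x\mapsto 2x$ on $[0,1]$, independently of $n\ge1$.
   Context: Let $\Omega=[\alpha,\beta]$ be a compact interval. An $\Omega$-tropical series is a function $F:\Omega\to[0,\infty)$ with $F(\alpha)=F(\beta)=0$ that can be written as $F(z)=\inf_{v\in\mathbb{Z}}(a_v+zv)$ for some real numbers $a_v$. For points $p_1,\dots,p_n\in(\alpha,\beta)$, $G_{\{p_1,\dots,p_n\}}0_\Omega$ denotes the pointwise minimal $\Omega$-tropical series that is non-smooth (not differentiable) at each $p_i$ (this minimum exists and is such a series). *)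

theory Defs
  imports "HOL-Probability.Probability"
begin

text \<open>An \<Omega>-tropical series on \<Omega> = [\<alpha>,\<beta>]: a function F with values in [0,\<infinity>) on \<Omega>,
  vanishing at both endpoints, of the form F z = inf over v in Z of (a v + z v)
  for some real coefficients a v (the infimum being finite on \<Omega>).
  Values of F outside \<Omega> are irrelevant.\<close>
definition tropical_series :: "real \<Rightarrow> real \<Rightarrow> (real \<Rightarrow> real) \<Rightarrow> bool" where
  "tropical_series \<alpha> \<beta> F \<longleftrightarrow>
     (\<forall>z\<in>{\<alpha>..\<beta>}. F z \<ge> 0) \<and> F \<alpha> = 0 \<and> F \<beta> = 0 \<and>
     (\<exists>a :: int \<Rightarrow> real. \<forall>z\<in>{\<alpha>..\<beta>}.
         bdd_below (range (\<lambda>v. a v + z * real_of_int v)) \<and>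
         F z = (INF v. a v + z * real_of_int v))"

text \<open>G_P 0_\<Omega>: the pointwise minimal \<Omega>-tropical series that is not differentiable at
  any point of P.  Since this minimal series exists, its value at z is the pointwise
  infimum of the values of all such series.\<close>
definition G :: "real \<Rightarrow> real \<Rightarrow> real set \<Rightarrow> real \<Rightarrow> real" where
  "G \<alpha> \<beta> P z = Inf {F z | F. tropical_series \<alpha> \<beta> F \<and> (\<forall>p\<in>P. \<not> F differentiable (at p))}"

end

theory Submission
  imports Defs
begin

definition gr :: "real \<Rightarrow> real \<Rightarrow> real" where
  "gr b z = min ((1-b)*z) (b*(1-z))"

lemma gr_nonneg: "b \<in> {0..1} \<Longrightarrow> z \<in> {0..1} \<Longrightarrow> gr b z \<ge> 0"
  by (auto simp: gr_def)

lemma gr_0: "b \<ge> 0 \<Longrightarrow> gr b 0 = 0" and gr_1: "b \<le> 1 \<Longrightarrow> gr b 1 = 0"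
  by (auto simp: gr_def)

lemma gr_left: "x \<le> b \<Longrightarrow> b \<le> 1 \<Longrightarrow> gr b x = (1-b)*x"
proof -
  assume "x \<le> b" "b \<le> 1"
  have "(1-b)*x \<le> b*(1-x)"
  proof -
    have "(1-b)*x - b*(1-x) = x - b" by (simp add: algebra_simps)
    thus ?thesis using \<open>x \<le> b\<close> by linarith
  qed
  thus ?thesis by (simp add: gr_def)
qed

lemma gr_right: "b \<le> x \<Longrightarrow> gr b x = b*(1-x)"
proof -
  assume "b \<le> x"
  have "(1-b)*x - b*(1-x) = x - b" by (simp add: algebra_simps)
  hence "(1-b)*x \<ge> b*(1-x)" using \<open>b \<le> x\<close> by linarith
  thus ?thesis by (simp add: gr_def)
qed

lemma gr_nondiff:
  assumes "p \<in> {0<..<1}"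
  shows "\<not> (gr p) differentiable (at p)"
proof
  assume "gr p differentiable (at p)"
  then obtain D where D: "(gr p has_real_derivative D) (at p)"
    by (auto simp: real_differentiable_def)
  have d1: "((\<lambda>x. gr p x + (p-1)*x) has_real_derivative (D + (p-1))) (at p)"
    by (rule derivative_eq_intros D | simp)+
  have d2: "((\<lambda>x. gr p x + p*x) has_real_derivative (D + p)) (at p)"
    by (rule derivative_eq_intros D | simp)+
  have "D + (p-1) = 0"
  proof (rule DERIV_local_max[OF d1 zero_less_one], intro allI impI)
    fix y
    have "gr p p = (1-p)*p" using assms by (simp add: gr_left)
    show "gr p y + (p-1)*y \<le> gr p p + (p-1)*p"
    proof (cases "y \<le> p")
      case True
      then show ?thesis using assms by (simp add: gr_left algebra_simps)
    next
      case False
      hence "gr p y = p*(1-y)" by (simp add: gr_right)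
      moreover have "p*(1-y) + (p-1)*y = p - y" by (simp add: algebra_simps)
      moreover have "gr p p + (p-1)*p = 0" using \<open>gr p p = (1-p)*p\<close> by (simp add: algebra_simps)
      ultimately show ?thesis using False by linarith
    qed
  qed
  moreover have "D + p = 0"
  proof (rule DERIV_local_max[OF d2 zero_less_one], intro allI impI)
    fix y
    have "gr p p = p*(1-p)" using assms by (simp add: gr_right)
    show "gr p y + p*y \<le> gr p p + p*p"
    proof (cases "y \<le> p")
      case True
      hence "gr p y = (1-p)*y" using assms by (simp add: gr_left)
      moreover have "(1-p)*y + p*y = y" by (simp add: algebra_simps)
      moreover have "gr p p + p*p = p" using \<open>gr p p = p*(1-p)\<close> by (simp add: algebra_simps)
      ultimately show ?thesis using True by linarith
    next
      case False
      then show ?thesis using assms \<open>gr p p = p*(1-p)\<close> by (simp add: gr_right algebra_simps)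
    qed
  qed
  ultimately show False by simp
qed

lemma gr_diff:
  assumes "z \<noteq> b" "b \<le> 1"
  shows "(gr b) differentiable (at z)"
proof (cases "z < b")
  case True
  have "((\<lambda>x. (1-b)*x) has_real_derivative (1-b)) (at z)"
    by (rule derivative_eq_intros | simp)+
  hence "(gr b has_real_derivative (1-b)) (at z)"
    by (rule has_field_derivative_transform_within_open[where S="{..<b}"])
       (use True assms in \<open>auto simp: gr_left\<close>)
  thus ?thesis by (auto simp: real_differentiable_def)
next
  case False
  hence F: "b < z" using assms by auto
  have "((\<lambda>x. b*(1-x)) has_real_derivative (-b)) (at z)"
    by (rule derivative_eq_intros | simp)+
  hence "(gr b has_real_derivative (-b)) (at z)"
    by (rule has_field_derivative_transform_within_open[where S="{b<..}"])
       (use F in \<open>auto simp: gr_right\<close>)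
  thus ?thesis by (auto simp: real_differentiable_def)
qed

lemma trop_from_lines:
  fixes F :: "real \<Rightarrow> real" and c :: "'s \<Rightarrow> real" and k :: "'s \<Rightarrow> int"
  assumes fin: "finite S"
    and le: "\<And>z s. z \<in> {0..1} \<Longrightarrow> s \<in> S \<Longrightarrow> F z \<le> c s + z * k s"
    and ex: "\<And>z. z \<in> {0..1} \<Longrightarrow> \<exists>s\<in>S. F z = c s + z * k s"
  shows "\<exists>a::int\<Rightarrow>real. \<forall>z\<in>{0..1}. bdd_below (range (\<lambda>v. a v + z * real_of_int v)) \<and>
            F z = (INF v. a v + z * real_of_int v)"
proof -
  define Cb where "Cb = (\<Sum>s\<in>S. \<bar>c s\<bar> + \<bar>real_of_int (k s)\<bar>)"
  define a where "a v = (if v \<in> k ` S then Min (c ` {s\<in>S. k s = v}) else Cb + \<bar>real_of_int v\<bar>)" for v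
  have Cb: "c s + z * k s \<le> Cb" if "s \<in> S" "z \<in> {0..1}" for s and z :: real
  proof -
    have "\<bar>z * k s\<bar> \<le> \<bar>real_of_int (k s)\<bar>" using that(2)
      by (auto simp: abs_mult intro!: mult_left_le_one_le)
    hence "c s + z * k s \<le> \<bar>c s\<bar> + \<bar>real_of_int (k s)\<bar>" by linarith
    also have "\<dots> \<le> Cb" unfolding Cb_def
      by (rule member_le_sum[OF that(1)]) (auto simp: fin)
    finally show ?thesis .
  qed
  have lb: "F z \<le> a v + z * v" if z: "z \<in> {0..1}" for z :: real and v
  proof (cases "v \<in> k ` S")
    case True
    have fin': "finite (c ` {s\<in>S. k s = v})" using fin by auto
    have ne: "c ` {s\<in>S. k s = v} \<noteq> {}" using True by auto
    obtain s where s: "s \<in> S" "k s = v" "a v = c s"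
      using Min_in[OF fin' ne] True unfolding a_def by auto
    show ?thesis using le[OF z s(1)] s by simp
  next
    case False
    obtain s where s: "s \<in> S" "F z = c s + z * k s" using ex[OF z] by auto
    have "z * v \<ge> - \<bar>real_of_int v\<bar>"
    proof -
      have "\<bar>z * v\<bar> \<le> \<bar>real_of_int v\<bar>" using z
        by (auto simp: abs_mult intro!: mult_left_le_one_le)
      thus ?thesis by linarith
    qed
    thus ?thesis using Cb[OF s(1) z] s(2) False unfolding a_def by simp
  qed
  have att: "\<exists>v. a v + z * v \<le> F z" if z: "z \<in> {0..1}" for z :: real
  proof -
    obtain s where s: "s \<in> S" "F z = c s + z * k s" using ex[OF z] by auto
    have fin': "finite (c ` {s'\<in>S. k s' = k s})" using fin by auto
    have "a (k s) \<le> c s" unfolding a_def using s(1)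
      by (auto intro!: Min_le fin')
    thus ?thesis using s by (intro exI[of _ "k s"]) simp
  qed
  show ?thesis
  proof (intro exI[of _ a] ballI conjI)
    fix z :: real assume z: "z \<in> {0..1}"
    show bdd: "bdd_below (range (\<lambda>v. a v + z * real_of_int v))"
      using lb[OF z] by (intro bdd_belowI[of _ "F z"]) auto
    obtain v where v: "a v + z * v \<le> F z" using att[OF z] by auto
    show "F z = (INF v. a v + z * real_of_int v)"
    proof (rule antisym)
      show "F z \<le> (INF v. a v + z * real_of_int v)"
        by (rule cINF_greatest) (auto intro: lb[OF z])
      show "(INF v. a v + z * real_of_int v) \<le> F z"
        using cINF_lower[OF bdd, of v] v by simp
    qed
  qed
qed

lemma sum_gr_line_eq:
  assumes fin: "finite I" and T: "T \<subseteq> I"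
  shows "(\<Sum>i\<in>T. (1 - w i) * z) + (\<Sum>i\<in>I-T. w i * (1 - z)) =
         (\<Sum>i\<in>I-T. w i) + z * (real (card T) - (\<Sum>i\<in>I. w i))"
proof -
  have fT: "finite T" using fin T finite_subset by blast
  have s: "(\<Sum>i\<in>I. w i) = (\<Sum>i\<in>T. w i) + (\<Sum>i\<in>I-T. w i)"
    using sum.subset_diff[OF T fin] by (simp add: add.commute)
  have a: "(\<Sum>i\<in>T. (1 - w i) * z) = z * real (card T) - z * (\<Sum>i\<in>T. w i)"
    by (simp add: sum_subtractf sum_distrib_left sum_distrib_right algebra_simps)
  have b: "(\<Sum>i\<in>I-T. w i * (1 - z)) = (\<Sum>i\<in>I-T. w i) - z * (\<Sum>i\<in>I-T. w i)"
    by (simp add: sum_subtractf sum_distrib_left sum_distrib_right algebra_simps)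
  show ?thesis unfolding a b s by (simp add: algebra_simps)
qed

lemma sum_gr_lines1:
  assumes fin: "finite I" and T: "T \<subseteq> I"
  shows "(\<Sum>i\<in>I. gr (w i) z) \<le> (\<Sum>i\<in>I-T. w i) + z * (real (card T) - (\<Sum>i\<in>I. w i))"
proof -
  have "(\<Sum>i\<in>I. gr (w i) z) = (\<Sum>i\<in>T. gr (w i) z) + (\<Sum>i\<in>I-T. gr (w i) z)"
    using sum.subset_diff[OF T fin] by (simp add: add.commute)
  also have "\<dots> \<le> (\<Sum>i\<in>T. (1 - w i) * z) + (\<Sum>i\<in>I-T. w i * (1 - z))"
    by (intro add_mono sum_mono) (auto simp: gr_def)
  also have "\<dots> = (\<Sum>i\<in>I-T. w i) + z * (real (card T) - (\<Sum>i\<in>I. w i))"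
    by (rule sum_gr_line_eq[OF fin T])
  finally show ?thesis .
qed

lemma sum_gr_lines2:
  assumes fin: "finite I"
  shows "\<exists>T. T \<subseteq> I \<and> (\<Sum>i\<in>I. gr (w i) z) = (\<Sum>i\<in>I-T. w i) + z * (real (card T) - (\<Sum>i\<in>I. w i))"
proof -
  define T where "T = {i\<in>I. (1 - w i) * z \<le> w i * (1 - z)}"
  have T: "T \<subseteq> I" by (auto simp: T_def)
  have "(\<Sum>i\<in>I. gr (w i) z) = (\<Sum>i\<in>T. gr (w i) z) + (\<Sum>i\<in>I-T. gr (w i) z)"
    using sum.subset_diff[OF T fin] by (simp add: add.commute)
  also have "\<dots> = (\<Sum>i\<in>T. (1 - w i) * z) + (\<Sum>i\<in>I-T. w i * (1 - z))"
    by (intro arg_cong2[where f="(+)"] sum.cong) (auto simp: gr_def T_def)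
  also have "\<dots> = (\<Sum>i\<in>I-T. w i) + z * (real (card T) - (\<Sum>i\<in>I. w i))"
    by (rule sum_gr_line_eq[OF fin T])
  finally show ?thesis using T by blast
qed

lemma trop_sum_gr:
  assumes fin: "finite I" and w: "\<And>i. i \<in> I \<Longrightarrow> w i \<in> {0..1}"
    and N: "(\<Sum>i\<in>I. w i) = real_of_int N"
  shows "tropical_series 0 1 (\<lambda>z. \<Sum>i\<in>I. gr (w i) z)"
proof -
  have w1: "\<And>i. i \<in> I \<Longrightarrow> w i \<le> 1" using w by auto
  have "\<exists>a::int\<Rightarrow>real. \<forall>z\<in>{0..1}. bdd_below (range (\<lambda>v. a v + z * real_of_int v)) \<and>
            (\<Sum>i\<in>I. gr (w i) z) = (INF v. a v + z * real_of_int v)"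
  proof (rule trop_from_lines[where S="Pow I" and c="\<lambda>T. \<Sum>i\<in>I-T. w i" and k="\<lambda>T. int (card T) - N"])
    show "finite (Pow I)" using fin by simp
    fix z :: real and T assume "z \<in> {0..1}" "T \<in> Pow I"
    hence "T \<subseteq> I" by simp
    thus "(\<Sum>i\<in>I. gr (w i) z) \<le> (\<Sum>i\<in>I-T. w i) + z * real_of_int (int (card T) - N)"
      using sum_gr_lines1[OF fin \<open>T \<subseteq> I\<close>, of w z] N by simp
  next
    fix z :: real assume "z \<in> {0..1}"
    obtain T where "T \<subseteq> I" "(\<Sum>i\<in>I. gr (w i) z) = (\<Sum>i\<in>I-T. w i) + z * (real (card T) - (\<Sum>i\<in>I. w i))"
      using sum_gr_lines2[OF fin, of w z] by blast
    thus "\<exists>T\<in>Pow I. (\<Sum>i\<in>I. gr (w i) z) = (\<Sum>i\<in>I-T. w i) + z * real_of_int (int (card T) - N)"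
      using N by (intro bexI[of _ T]) auto
  qed
  moreover have "\<forall>z\<in>{0..1}. (\<Sum>i\<in>I. gr (w i) z) \<ge> 0"
    using w by (auto intro!: sum_nonneg gr_nonneg)
  moreover have "(\<Sum>i\<in>I. gr (w i) 0) = 0" "(\<Sum>i\<in>I. gr (w i) 1) = 0"
    using w by (auto simp: gr_0 gr_1 intro!: sum.neutral)
  ultimately show ?thesis unfolding tropical_series_def by blast
qed

definition qf :: "real set \<Rightarrow> real" where "qf P = frac (- (\<Sum>p\<in>P. p))"

definition HP :: "real set \<Rightarrow> real \<Rightarrow> real" where
  "HP P z = (\<Sum>p\<in>P. gr p z) + gr (qf P) z"

lemma qf_range: "qf P \<in> {0..<1}"
  by (simp add: qf_def frac_lt_1)

lemma qf_int: "(\<Sum>p\<in>P. p) + qf P = real_of_int (- floor (- (\<Sum>p\<in>P. p)))"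
  by (simp add: qf_def frac_def)

lemma HP_trop:
  assumes fin: "finite P" and P: "P \<subseteq> {0<..<1}"
  shows "tropical_series 0 1 (HP P)"
proof -
  define I where "I = insert None (Some ` P)"
  define w where "w i = (case i of None \<Rightarrow> qf P | Some p \<Rightarrow> p)" for i
  have eq: "(\<Sum>i\<in>I. f (w i)) = (\<Sum>p\<in>P. f p) + f (qf P)" for f :: "real \<Rightarrow> real"
  proof -
    have "(\<Sum>i\<in>I. f (w i)) = f (w None) + (\<Sum>i\<in>Some ` P. f (w i))"
      unfolding I_def using fin by (subst sum.insert) auto
    also have "(\<Sum>i\<in>Some ` P. f (w i)) = (\<Sum>p\<in>P. f p)"
      by (subst sum.reindex) (auto simp: w_def inj_on_def)
    finally show ?thesis by (simp add: w_def)
  qed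
  have "tropical_series 0 1 (\<lambda>z. \<Sum>i\<in>I. gr (w i) z)"
  proof (rule trop_sum_gr)
    show "finite I" using fin by (simp add: I_def)
    show "w i \<in> {0..1}" if "i \<in> I" for i
      using that P qf_range[of P] by (auto simp: I_def w_def)
    show "(\<Sum>i\<in>I. w i) = real_of_int (- floor (- (\<Sum>p\<in>P. p)))"
      using eq[of "\<lambda>x. x"] qf_int[of P] by simp
  qed
  moreover have "(\<lambda>z. \<Sum>i\<in>I. gr (w i) z) = HP P"
    using eq by (auto simp: HP_def fun_eq_iff)
  ultimately show ?thesis by simp
qed

lemma HP_nondiff:
  assumes fin: "finite P" and P: "P \<subseteq> {0<..<1}" and p: "p \<in> P"
  shows "\<not> HP P differentiable (at p)"
proof
  assume H: "HP P differentiable (at p)"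
  have p01: "p \<in> {0<..<1}" using P p by auto
  define rest where "rest z = (\<Sum>b\<in>P-{p}. gr b z) + (if qf P = p then 0 else gr (qf P) z)" for z
  have qd: "(\<lambda>x. if qf P = p then 0 else gr (qf P) x) differentiable (at p)"
    using qf_range[of P] by (cases "qf P = p") (auto intro!: gr_diff)
  have rd: "rest differentiable (at p)"
    unfolding rest_def
    using P qf_range[of P] fin
    by (intro differentiable_add differentiable_sum qd) (auto intro!: gr_diff)
  have split: "HP P z = (if qf P = p then 2 else 1) * gr p z + rest z" for z
  proof -
    have "(\<Sum>b\<in>P. gr b z) = gr p z + (\<Sum>b\<in>P-{p}. gr b z)"
      using fin p by (simp add: sum.remove)
    thus ?thesis by (auto simp: HP_def rest_def)
  qed
  have "(\<lambda>z. HP P z - rest z) differentiable (at p)"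
    using H rd by (rule differentiable_diff)
  moreover have "(\<lambda>z. HP P z - rest z) = (\<lambda>z. (if qf P = p then 2 else 1) * gr p z)"
    using split by auto
  ultimately have "(\<lambda>z. (if qf P = p then 2 else 1) * gr p z) differentiable (at p)" by simp
  hence "gr p differentiable (at p)"
  proof (cases "qf P = p")
    case True
    assume "(\<lambda>z. (if qf P = p then 2 else 1) * gr p z) differentiable (at p)"
    hence "(\<lambda>z. 2 * gr p z) differentiable (at p)" using True by simp
    hence "(\<lambda>z. (1/2) * (2 * gr p z)) differentiable (at p)"
      by (rule differentiable_mult[OF differentiable_const])
    thus ?thesis by simp
  next
    case False
    assume "(\<lambda>z. (if qf P = p then 2 else 1) * gr p z) differentiable (at p)"
    thus ?thesis using False by simp
  qed
  thus False using gr_nondiff[OF p01] by simp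
qed

locale tropF =
  fixes F :: "real \<Rightarrow> real" and a :: "int \<Rightarrow> real"
  assumes rep: "\<And>z. z \<in> {0..1} \<Longrightarrow> bdd_below (range (\<lambda>v. a v + z * of_int v)) \<and> F z = (INF v. a v + z * of_int v)"
  and F0: "F 0 = 0" and F1: "F 1 = 0" and Fnn: "\<And>z. z \<in> {0..1} \<Longrightarrow> F z \<ge> 0"
begin

lemma le_line: "z \<in> {0..1} \<Longrightarrow> F z \<le> a v + z * of_int v"
  using rep[of z] by (auto intro: cINF_lower)

lemma a_nonneg: "a v \<ge> 0"
  using le_line[of 0 v] F0 by simp

lemma a_one: "a v + of_int v \<ge> 0"
  using le_line[of 1 v] F1 by simp

lemma V_finite:
  assumes z: "z \<in> {0<..<1}"
  shows "finite {v. a v + z * of_int v < B}"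
proof -
  define N where "N = ceiling (\<bar>B\<bar> / z + \<bar>B\<bar> / (1 - z))"
  have z0: "z > 0" and z1: "1 - z > 0" using z by auto
  have "{v. a v + z * of_int v < B} \<subseteq> {-N..N}"
  proof
    fix v assume "v \<in> {v. a v + z * of_int v < B}"
    hence v: "a v + z * of_int v < B" by simp
    have "z * of_int v < B" using v a_nonneg[of v] by linarith
    hence "of_int v < B / z" using z0 by (simp add: pos_less_divide_eq mult.commute)
    also have "\<dots> \<le> \<bar>B\<bar> / z" using z0 by (intro divide_right_mono) auto
    also have "\<dots> \<le> \<bar>B\<bar> / z + \<bar>B\<bar> / (1 - z)" using z1 by simp
    also have "\<dots> \<le> of_int N" unfolding N_def by simp
    finally have up: "v \<le> N" by simp
    have "a v + z * of_int v = (a v + of_int v) - (1 - z) * of_int v" by (simp add: algebra_simps)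
    hence "- ((1 - z) * of_int v) < B" using v a_one[of v] by linarith
    hence "(1 - z) * (- of_int v) < B" by simp
    hence "- of_int v < B / (1 - z)" using z1 by (simp add: pos_less_divide_eq mult.commute)
    also have "\<dots> \<le> \<bar>B\<bar> / (1 - z)" using z1 by (intro divide_right_mono) auto
    also have "\<dots> \<le> \<bar>B\<bar> / z + \<bar>B\<bar> / (1 - z)" using z0 by simp
    also have "\<dots> \<le> of_int N" unfolding N_def by simp
    finally have "- v \<le> N" by simp
    thus "v \<in> {-N..N}" using up by simp
  qed
  thus ?thesis by (rule finite_subset) simp
qed

lemma attain:
  assumes z: "z \<in> {0<..<1}"
  shows "\<exists>v. a v + z * of_int v = F z"
proof -
  define V where "V = {v. a v + z * of_int v < F z + 1}"
  have fin: "finite V" unfolding V_def by (rule V_finite[OF z])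
  have z01: "z \<in> {0..1}" using z by auto
  have bdd: "bdd_below (range (\<lambda>v. a v + z * of_int v))" and Fz: "F z = (INF v. a v + z * of_int v)"
    using rep[OF z01] by auto
  have "(INF v. a v + z * of_int v) < F z + 1" using Fz by simp
  then obtain v1 where "a v1 + z * of_int v1 < F z + 1"
    using cINF_less_iff[OF _ bdd] by auto
  hence ne: "V \<noteq> {}" unfolding V_def by auto
  define m where "m = Min ((\<lambda>v. a v + z * of_int v) ` V)"
  have "m \<in> (\<lambda>v. a v + z * of_int v) ` V"
    unfolding m_def using fin ne by (intro Min_in) auto
  then obtain v0 where v0: "v0 \<in> V" "m = a v0 + z * of_int v0" by auto
  have all: "a v0 + z * of_int v0 \<le> a v + z * of_int v" for v
  proof (cases "v \<in> V")
    case True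
    have "m \<le> a v + z * of_int v" unfolding m_def using fin True by (intro Min_le) auto
    then show ?thesis using v0 by simp
  next
    case False
    then show ?thesis using v0(1) unfolding V_def by auto
  qed
  have "F z \<ge> a v0 + z * of_int v0" unfolding Fz by (rule cINF_greatest) (auto intro: all)
  moreover have "F z \<le> a v0 + z * of_int v0" using le_line[OF z01] .
  ultimately show ?thesis by auto
qed

end

context tropF begin

lemma far_line:
  assumes z: "z \<in> {0<..<1}" and x: "x \<in> {0..1}"
    and c: "a v + z * of_int v \<ge> c" and c1: "c \<ge> 1"
    and dx: "\<bar>x - z\<bar> * c \<le> min z (1 - z) / 2"
  shows "a v + x * of_int v \<ge> c - 1/2"
proof (cases "x \<ge> z")
  case True
  have z1: "1 - z > 0" using z by auto
  have id: "(1 - z) * (a v + x * of_int v) = (1 - x) * (a v + z * of_int v) + (x - z) * (a v + of_int v)"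
    by (simp add: algebra_simps)
  have "(1 - x) * (a v + z * of_int v) \<ge> (1 - x) * c"
    using c x by (intro mult_left_mono) auto
  moreover have "(x - z) * (a v + of_int v) \<ge> 0" using True a_one[of v] by simp
  ultimately have "(1 - z) * (a v + x * of_int v) \<ge> (1 - x) * c" using id by linarith
  moreover have "(1 - x) * c = (1 - z) * c - (x - z) * c" by (simp add: algebra_simps)
  moreover have "(x - z) * c \<le> (1 - z) / 2" using dx True by auto
  ultimately have "(1 - z) * (a v + x * of_int v) \<ge> (1 - z) * c - (1 - z) / 2" by linarith
  moreover have "(1 - z) * (c - 1/2) = (1 - z) * c - (1 - z) / 2" by (simp add: algebra_simps)
  ultimately have "(1 - z) * (a v + x * of_int v) \<ge> (1 - z) * (c - 1/2)" by linarith
  thus ?thesis using z1 by (simp add: mult_le_cancel_left_pos)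
next
  case False
  have z0: "z > 0" using z by auto
  have id: "z * (a v + x * of_int v) = x * (a v + z * of_int v) + (z - x) * a v"
    by (simp add: algebra_simps)
  have "x * (a v + z * of_int v) \<ge> x * c"
    using c x by (intro mult_left_mono) auto
  moreover have "(z - x) * a v \<ge> 0" using False a_nonneg[of v] by simp
  ultimately have "z * (a v + x * of_int v) \<ge> x * c" using id by linarith
  moreover have "x * c = z * c - (z - x) * c" by (simp add: algebra_simps)
  moreover have "(z - x) * c \<le> z / 2" using dx False by auto
  ultimately have "z * (a v + x * of_int v) \<ge> z * c - z / 2" by linarith
  moreover have "z * (c - 1/2) = z * c - z / 2" by (simp add: algebra_simps)
  ultimately have "z * (a v + x * of_int v) \<ge> z * (c - 1/2)" by linarith
  thus ?thesis using z0 by (simp add: mult_le_cancel_left_pos)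
qed

lemma local_struct:
  assumes z: "z \<in> {0<..<1}"
  shows "\<exists>\<delta>>0. \<exists>B. \<forall>x. \<bar>x - z\<bar> < \<delta> \<longrightarrow> x \<in> {0<..<1} \<and>
           (\<exists>v. a v + z * of_int v = F z \<and> \<bar>real_of_int v\<bar> \<le> B \<and> F x = F z + of_int v * (x - z))"
proof -
  define c where "c = F z + 1"
  have z01: "z \<in> {0..1}" using z by auto
  have c1: "c \<ge> 1" using Fnn[OF z01] unfolding c_def by simp
  define V where "V = {v. a v + z * of_int v < c}"
  define S where "S = {v. a v + z * of_int v = F z}"
  have finV: "finite V" unfolding V_def by (rule V_finite[OF z])
  have SV: "S \<subseteq> V" unfolding S_def V_def c_def by auto
  have finS: "finite S" using finV SV finite_subset by blast
  have neS: "S \<noteq> {}" using attain[OF z] unfolding S_def by auto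
  define B where "B = (\<Sum>v\<in>V. \<bar>real_of_int v\<bar>)"
  have Bv: "\<bar>real_of_int v\<bar> \<le> B" if "v \<in> V" for v
    unfolding B_def by (rule member_le_sum[OF that]) (auto simp: finV)
  have B0: "B \<ge> 0" unfolding B_def by (simp add: sum_nonneg)
  define \<gamma> where "\<gamma> = Min (insert 1 ((\<lambda>v. a v + z * of_int v - F z) ` (V - S)))"
  have \<gamma>le: "\<gamma> \<le> 1" unfolding \<gamma>_def using finV by (intro Min_le) auto
  have \<gamma>v: "\<gamma> \<le> a v + z * of_int v - F z" if "v \<in> V - S" for v
    unfolding \<gamma>_def using finV that by (intro Min_le) auto
  have \<gamma>pos: "\<gamma> > 0"
  proof -
    have "\<gamma> \<in> insert 1 ((\<lambda>v. a v + z * of_int v - F z) ` (V - S))"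
      unfolding \<gamma>_def using finV by (intro Min_in) auto
    moreover have "a v + z * of_int v - F z > 0" if "v \<in> V - S" for v
      using le_line[OF z01, of v] that unfolding S_def by auto
    ultimately show ?thesis by auto
  qed
  define \<delta> where "\<delta> = min (min z (1 - z) / (2 * c)) (\<gamma> / (2 * (B + 1)))"
  have \<delta>pos: "\<delta> > 0" unfolding \<delta>_def using z c1 \<gamma>pos B0 by auto
  show ?thesis
  proof (rule exI[of _ \<delta>], rule conjI[OF \<delta>pos], rule exI[of _ B], intro allI impI)
    fix x assume dx: "\<bar>x - z\<bar> < \<delta>"
    have d1: "\<bar>x - z\<bar> * c \<le> min z (1 - z) / 2"
    proof -
      have "\<bar>x - z\<bar> \<le> min z (1 - z) / (2 * c)" using dx unfolding \<delta>_def by auto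
      hence "\<bar>x - z\<bar> * c \<le> min z (1 - z) / (2 * c) * c" using c1 by (intro mult_right_mono) auto
      also have "\<dots> = min z (1 - z) / 2" using c1 by (simp add: field_simps)
      finally show ?thesis .
    qed
    have d2: "B * \<bar>x - z\<bar> < \<gamma> / 2"
    proof -
      have "\<bar>x - z\<bar> < \<gamma> / (2 * (B + 1))" using dx unfolding \<delta>_def by auto
      hence "(B + 1) * \<bar>x - z\<bar> < (B + 1) * (\<gamma> / (2 * (B + 1)))" using B0 by (intro mult_strict_left_mono) auto
      also have "\<dots> = \<gamma> / 2" using B0 by (simp add: field_simps)
      finally have "(B + 1) * \<bar>x - z\<bar> < \<gamma> / 2" .
      moreover have "(B + 1) * \<bar>x - z\<bar> = B * \<bar>x - z\<bar> + \<bar>x - z\<bar>" by (simp add: algebra_simps)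
      ultimately show ?thesis by (smt (verit) abs_ge_zero)
    qed
    have xz: "\<bar>x - z\<bar> \<le> min z (1 - z) / 2" using d1 c1
      by (smt (verit, best) mult_le_cancel_left1 mult.commute abs_ge_zero)
    have x0: "x \<in> {0<..<1}" using xz z by (auto simp: abs_if split: if_splits)
    hence x01: "x \<in> {0..1}" by auto
    define m where "m = Min ((\<lambda>v. of_int v * (x - z)) ` S)"
    have "m \<in> (\<lambda>v. of_int v * (x - z)) ` S" unfolding m_def using finS neS by (intro Min_in) auto
    then obtain v0 where v0: "v0 \<in> S" "m = of_int v0 * (x - z)" by auto
    have v0min: "of_int v0 * (x - z) \<le> of_int v * (x - z)" if "v \<in> S" for v
      using v0 finS that unfolding m_def by (metis (no_types, lifting) Min_le finite_imageI image_eqI)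
    have v0V: "v0 \<in> V" using v0 SV by auto
    have lin: "a v + x * of_int v = (a v + z * of_int v) + of_int v * (x - z)" for v
      by (simp add: algebra_simps)
    have v0val: "a v0 + x * of_int v0 = F z + of_int v0 * (x - z)"
      using lin[of v0] v0 unfolding S_def by simp
    have small: "of_int v0 * (x - z) \<le> B * \<bar>x - z\<bar>"
    proof -
      have "of_int v0 * (x - z) \<le> \<bar>of_int v0\<bar> * \<bar>x - z\<bar>" by (simp add: abs_mult[symmetric])
      also have "\<dots> \<le> B * \<bar>x - z\<bar>" using Bv[OF v0V] by (intro mult_right_mono) auto
      finally show ?thesis .
    qed
    have all: "a v0 + x * of_int v0 \<le> a v + x * of_int v" for v
    proof -
      consider "v \<in> S" | "v \<in> V - S" | "v \<notin> V" by blast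
      then show ?thesis
      proof cases
        case 1
        then show ?thesis using v0val lin[of v] v0min[of v] unfolding S_def by auto
      next
        case 2
        have "\<gamma> \<le> a v + z * of_int v - F z" using \<gamma>v[OF 2] .
        moreover have "- (of_int v * (x - z)) \<le> B * \<bar>x - z\<bar>"
        proof -
          have "- (of_int v * (x - z)) \<le> \<bar>of_int v\<bar> * \<bar>x - z\<bar>" by (simp add: abs_mult[symmetric])
          also have "\<dots> \<le> B * \<bar>x - z\<bar>" using Bv 2 by (intro mult_right_mono) auto
          finally show ?thesis .
        qed
        ultimately show ?thesis using lin[of v] v0val small d2 by linarith
      next
        case 3
        hence "a v + z * of_int v \<ge> c" unfolding V_def by auto
        from far_line[OF z x01 this c1 d1] have "a v + x * of_int v \<ge> c - 1/2" .
        thus ?thesis using v0val small d2 \<gamma>le unfolding c_def by linarith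
      qed
    qed
    have "F x = a v0 + x * of_int v0"
    proof (rule antisym)
      show "F x \<le> a v0 + x * of_int v0" using le_line[OF x01] .
      show "F x \<ge> a v0 + x * of_int v0"
        using rep[OF x01] by (auto intro!: cINF_greatest all)
    qed
    thus "x \<in> {0<..<1} \<and> (\<exists>v. a v + z * of_int v = F z \<and> \<bar>real_of_int v\<bar> \<le> B \<and> F x = F z + of_int v * (x - z))"
      using x0 v0 v0val Bv[OF v0V] unfolding S_def by auto
  qed
qed

end

context tropF begin

lemma F_cont: "continuous_on {0..1} F"
  unfolding continuous_on_iff
proof (intro ballI allI impI)
  fix z e :: real assume z: "z \<in> {0..1}" and e: "e > 0"
  consider "z = 0" | "z = 1" | "z \<in> {0<..<1}" using z by fastforce
  then show "\<exists>d>0. \<forall>x\<in>{0..1}. dist x z < d \<longrightarrow> dist (F x) (F z) < e"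
  proof cases
    case 1
    have bdd: "bdd_below (range (\<lambda>v. a v + 0 * of_int v))" using rep[of 0] by auto
    have lt: "(INF v. a v + 0 * of_int v) < e/2" using rep[of 0] F0 e by auto
    obtain v where v: "a v + 0 * of_int v < e/2" using lt unfolding cINF_less_iff[OF UNIV_not_empty bdd] by blast
    define d where "d = e / (2 * (\<bar>real_of_int v\<bar> + 1))"
    have d: "d > 0" using e unfolding d_def by (auto intro!: divide_pos_pos add_nonneg_pos)
    show ?thesis
    proof (intro exI[of _ d] conjI d ballI impI)
      fix x assume x: "x \<in> {0..1}" "dist x z < d"
      have "x * of_int v \<le> x * \<bar>real_of_int v\<bar>" using x by (intro mult_left_mono) auto
      also have "\<dots> \<le> d * \<bar>real_of_int v\<bar>" using x 1 by (intro mult_right_mono) (auto simp: dist_real_def)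
      also have "\<dots> < e / 2"
      proof -
        have "d * \<bar>real_of_int v\<bar> = e / 2 * (\<bar>real_of_int v\<bar> / (\<bar>real_of_int v\<bar> + 1))"
          unfolding d_def by (simp add: field_simps)
        also have "\<dots> < e / 2 * 1" using e by (intro mult_strict_left_mono) auto
        finally show ?thesis by simp
      qed
      finally have "x * of_int v < e / 2" .
      hence "F x < e" using le_line[OF x(1), of v] v by linarith
      thus "dist (F x) (F z) < e" using Fnn[OF x(1)] 1 F0 by (simp add: dist_real_def)
    qed
  next
    case 2
    have bdd: "bdd_below (range (\<lambda>v. a v + 1 * of_int v))" using rep[of 1] by auto
    have lt: "(INF v. a v + 1 * of_int v) < e/2" using rep[of 1] F1 e by auto
    obtain v where v: "a v + 1 * of_int v < e/2" using lt unfolding cINF_less_iff[OF UNIV_not_empty bdd] by blast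
    define d where "d = e / (2 * (\<bar>real_of_int v\<bar> + 1))"
    have d: "d > 0" using e unfolding d_def by (auto intro!: divide_pos_pos add_nonneg_pos)
    show ?thesis
    proof (intro exI[of _ d] conjI d ballI impI)
      fix x assume x: "x \<in> {0..1}" "dist x z < d"
      have "- ((1 - x) * of_int v) \<le> (1 - x) * \<bar>real_of_int v\<bar>" using x
        by (metis abs_ge_minus_self abs_mult abs_of_nonneg atLeastAtMost_iff diff_ge_0_iff_ge mult_minus_right order_trans)
      also have "\<dots> \<le> d * \<bar>real_of_int v\<bar>" using x 2 by (intro mult_right_mono) (auto simp: dist_real_def)
      also have "\<dots> < e / 2"
      proof -
        have "d * \<bar>real_of_int v\<bar> = e / 2 * (\<bar>real_of_int v\<bar> / (\<bar>real_of_int v\<bar> + 1))"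
          unfolding d_def by (simp add: field_simps)
        also have "\<dots> < e / 2 * 1" using e by (intro mult_strict_left_mono) auto
        finally show ?thesis by simp
      qed
      finally have "- ((1 - x) * of_int v) < e / 2" .
      moreover have "a v + x * of_int v = (a v + 1 * of_int v) - (1 - x) * of_int v" by (simp add: algebra_simps)
      ultimately have "F x < e" using le_line[OF x(1), of v] v by linarith
      thus "dist (F x) (F z) < e" using Fnn[OF x(1)] 2 F1 by (simp add: dist_real_def)
    qed
  next
    case 3
    obtain \<delta> B where \<delta>: "\<delta> > 0" and loc: "\<And>x. \<bar>x - z\<bar> < \<delta> \<Longrightarrow> x \<in> {0<..<1} \<and>
           (\<exists>v. a v + z * of_int v = F z \<and> \<bar>real_of_int v\<bar> \<le> B \<and> F x = F z + of_int v * (x - z))"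
      using local_struct[OF 3] by blast
    have B0: "B \<ge> 0" using loc[of z] \<delta> by auto
    define d where "d = min \<delta> (e / (B + 1))"
    have d: "d > 0" using e \<delta> B0 unfolding d_def by auto
    show ?thesis
    proof (intro exI[of _ d] conjI d ballI impI)
      fix x assume x: "x \<in> {0..1}" "dist x z < d"
      hence "\<bar>x - z\<bar> < \<delta>" unfolding d_def dist_real_def by auto
      then obtain v where v: "\<bar>real_of_int v\<bar> \<le> B" "F x = F z + of_int v * (x - z)" using loc by blast
      have "\<bar>F x - F z\<bar> = \<bar>real_of_int v\<bar> * \<bar>x - z\<bar>" using v by (simp add: abs_mult)
      also have "\<dots> \<le> B * \<bar>x - z\<bar>" using v by (intro mult_right_mono) auto
      also have "\<dots> \<le> B * d" using x B0 by (intro mult_left_mono) (auto simp: dist_real_def)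
      also have "\<dots> < e"
      proof -
        have "B * d \<le> B * (e / (B + 1))" using B0 unfolding d_def by (intro mult_left_mono) auto
        also have "\<dots> = e * (B / (B + 1))" by (simp add: field_simps)
        also have "\<dots> < e * 1" using e B0 by (intro mult_strict_left_mono) auto
        finally show ?thesis by simp
      qed
      finally show "dist (F x) (F z) < e" by (simp add: dist_real_def)
    qed
  qed
qed

lemma kink:
  assumes p: "p \<in> {0<..<1}" and nd: "\<not> F differentiable (at p)"
  shows "\<exists>l r. a l + p * of_int l = F p \<and> a r + p * of_int r = F p \<and> r < l"
proof (rule ccontr)
  assume H: "\<not> ?thesis"
  obtain v0 where v0: "a v0 + p * of_int v0 = F p" using attain[OF p] by blast
  have uniq: "v = v0" if "a v + p * of_int v = F p" for v
    using H v0 that by (metis linorder_neqE)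
  obtain \<delta> B where \<delta>: "\<delta> > 0" and loc: "\<And>x. \<bar>x - p\<bar> < \<delta> \<Longrightarrow> x \<in> {0<..<1} \<and>
           (\<exists>v. a v + p * of_int v = F p \<and> \<bar>real_of_int v\<bar> \<le> B \<and> F x = F p + of_int v * (x - p))"
    using local_struct[OF p] by blast
  have eq: "F p + of_int v0 * (x - p) = F x" if "x \<in> ball p \<delta>" for x
  proof -
    have "\<bar>x - p\<bar> < \<delta>" using that by (simp add: dist_real_def abs_minus_commute)
    then obtain v where "a v + p * of_int v = F p" "F x = F p + of_int v * (x - p)" using loc by blast
    thus ?thesis using uniq by auto
  qed
  have "((\<lambda>x. F p + of_int v0 * (x - p)) has_real_derivative of_int v0) (at p)"
    by (rule derivative_eq_intros | simp)+
  hence "(F has_real_derivative of_int v0) (at p)"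
    by (rule has_field_derivative_transform_within_open[where S="ball p \<delta>"]) (use \<delta> eq in auto)
  hence "F differentiable (at p)" by (auto simp: real_differentiable_def)
  thus False using nd by simp
qed

end

lemma chord_from_local:
  fixes f :: "real \<Rightarrow> real"
  assumes ab: "a < b" and cont: "continuous_on {a..b} f"
    and loc: "\<And>z. z \<in> {a<..<b} \<Longrightarrow> \<exists>m \<delta>. \<delta> > 0 \<and> (\<forall>x\<in>{a..b}. \<bar>x - z\<bar> < \<delta> \<longrightarrow> f x \<le> f z + m * (x - z))"
    and t: "t \<in> {a..b}"
  shows "f t * (b - a) \<ge> f a * (b - t) + f b * (t - a)"
proof (rule ccontr)
  define D where "D x = f x * (b - a) - (f a * (b - x) + f b * (x - a))" for x
  assume "\<not> ?thesis"
  hence Dt: "D t < 0" unfolding D_def by simp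
  have contD: "continuous_on {a..b} D" unfolding D_def
    by (intro continuous_intros cont)
  obtain t0 where t0: "t0 \<in> {a..b}" "\<And>y. y \<in> {a..b} \<Longrightarrow> D t0 \<le> D y"
    using continuous_attains_inf[OF compact_Icc _ contD] ab by auto
  define mn where "mn = D t0"
  have mn: "mn < 0" using t0(2)[OF t] Dt unfolding mn_def by simp
  define K where "K = {a..b} \<inter> D -` {mn}"
  have clK: "closed K" unfolding K_def by (rule continuous_closed_preimage[OF contD]) auto
  have neK: "K \<noteq> {}" using t0 unfolding K_def mn_def by auto
  have bddK: "bdd_below K" unfolding K_def by (rule bdd_belowI[of _ a]) auto
  define t1 where "t1 = Inf K"
  have t1K: "t1 \<in> K" unfolding t1_def by (rule closed_contains_Inf[OF neK bddK clK])
  have Da: "D a = 0" and Db: "D b = 0" unfolding D_def by (simp_all add: algebra_simps)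
  have t1ab: "t1 \<in> {a<..<b}"
  proof -
    have "t1 \<in> {a..b}" "D t1 = mn" using t1K unfolding K_def by auto
    moreover have "t1 \<noteq> a" "t1 \<noteq> b" using Da Db mn \<open>D t1 = mn\<close> by auto
    ultimately show ?thesis by auto
  qed
  have Dt1: "D t1 = mn" using t1K unfolding K_def by auto
  have Dmin: "D y \<ge> mn" if "y \<in> {a..b}" for y using t0(2)[OF that] unfolding mn_def .
  obtain m \<delta> where \<delta>: "\<delta> > 0" and fl: "\<And>x. x \<in> {a..b} \<Longrightarrow> \<bar>x - t1\<bar> < \<delta> \<Longrightarrow> f x \<le> f t1 + m * (x - t1)"
    using loc[OF t1ab] by blast
  define \<mu> where "\<mu> = (b - a) * m + f a - f b"
  have Dl: "D x - D t1 \<le> \<mu> * (x - t1)" if "x \<in> {a..b}" "\<bar>x - t1\<bar> < \<delta>" for x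
  proof -
    have "D x - D t1 = (b - a) * (f x - f t1) + (f a - f b) * (x - t1)"
      unfolding D_def by (simp add: algebra_simps)
    also have "(b - a) * (f x - f t1) \<le> (b - a) * (m * (x - t1))"
      using fl[OF that] ab by (intro mult_left_mono) auto
    finally show ?thesis unfolding \<mu>_def by (simp add: algebra_simps)
  qed
  define h where "h = min (\<delta>/2) ((b - t1)/2)"
  have h1: "h \<le> (b - t1)/2" unfolding h_def by (rule min.cobounded2)
  have h2: "h \<le> \<delta>/2" unfolding h_def by (rule min.cobounded1)
  have h3: "h > 0" using \<delta> t1ab unfolding h_def by auto
  have h: "h > 0" "t1 + h \<in> {a..b}" "\<bar>(t1 + h) - t1\<bar> < \<delta>"
    using h1 h2 h3 \<delta> t1ab by auto
  have "0 \<le> \<mu> * h" using Dl[OF h(2,3)] Dmin[OF h(2)] Dt1 by simp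
  hence mu: "\<mu> \<ge> 0" using h(1) by (simp add: zero_le_mult_iff)
  define h' where "h' = min (\<delta>/2) ((t1 - a)/2)"
  have h1': "h' \<le> (t1 - a)/2" unfolding h'_def by (rule min.cobounded2)
  have h2': "h' \<le> \<delta>/2" unfolding h'_def by (rule min.cobounded1)
  have h3': "h' > 0" using \<delta> t1ab unfolding h'_def by auto
  have h': "h' > 0" "t1 - h' \<in> {a..b}" "\<bar>(t1 - h') - t1\<bar> < \<delta>"
    using h1' h2' h3' \<delta> t1ab by auto
  have "D (t1 - h') - D t1 \<le> \<mu> * (- h')" using Dl[OF h'(2,3)] by simp
  moreover have "\<mu> * (- h') \<le> 0" using mu h'(1) by (simp add: mult_nonneg_nonneg)
  ultimately have "D (t1 - h') \<le> mn" using Dt1 by simp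
  hence "D (t1 - h') = mn" using Dmin[OF h'(2)] by simp
  hence "t1 - h' \<in> K" using h'(2) unfolding K_def by auto
  hence "t1 \<le> t1 - h'" unfolding t1_def using bddK by (rule cInf_lower)
  thus False using h'(1) by simp
qed

context tropF begin

definition R :: "real set \<Rightarrow> real \<Rightarrow> real" where
  "R P z = F z - (\<Sum>p\<in>P. gr p z)"

lemma R_cont: "finite P \<Longrightarrow> continuous_on {0..1} (R P)"
  unfolding R_def gr_def by (intro continuous_intros F_cont)

lemma R_loc:
  assumes fin: "finite P" and P: "P \<subseteq> {0<..<1}" and nd: "\<forall>p\<in>P. \<not> F differentiable (at p)"
    and z: "z \<in> {0<..<1}"
  shows "\<exists>m \<delta> (k::int). \<delta> > 0 \<and> m = of_int k + (\<Sum>p\<in>P. p) \<and>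
           (\<forall>x\<in>{0..1}. \<bar>x - z\<bar> < \<delta> \<longrightarrow> R P x \<le> R P z + m * (x - z))"
proof -
  define Q where "Q = P - {z}"
  have finQ: "finite Q" using fin unfolding Q_def by simp
  define \<delta> where "\<delta> = Min (insert 1 ((\<lambda>p. \<bar>p - z\<bar>) ` Q))"
  have \<delta>pos: "\<delta> > 0"
  proof -
    have "\<delta> \<in> insert 1 ((\<lambda>p. \<bar>p - z\<bar>) ` Q)" unfolding \<delta>_def using finQ by (intro Min_in) auto
    thus ?thesis unfolding Q_def by auto
  qed
  have \<delta>le: "\<delta> \<le> \<bar>p - z\<bar>" if "p \<in> Q" for p unfolding \<delta>_def using finQ that by (intro Min_le) auto
  define \<sigma> where "\<sigma> p = (if z < p then 1 - p else - p)" for p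
  define cnt where "cnt = card {p\<in>Q. z < p}"
  have sig_sum: "(\<Sum>p\<in>Q. \<sigma> p) = real cnt - (\<Sum>p\<in>Q. p)"
  proof -
    have "(\<Sum>p\<in>Q. \<sigma> p) = (\<Sum>p\<in>Q. (if z < p then 1 else 0) - p)"
      unfolding \<sigma>_def by (intro sum.cong) auto
    also have "\<dots> = (\<Sum>p\<in>Q. (if z < p then 1 else 0)) - (\<Sum>p\<in>Q. p)" by (simp add: sum_subtractf)
    also have "(\<Sum>p\<in>Q. (if z < p then 1 else 0)) = (\<Sum>p\<in>{p\<in>Q. z < p}. (1::real))"
      by (rule sum.inter_filter[OF finQ, symmetric])
    also have "\<dots> = real cnt" unfolding cnt_def by simp
    finally show ?thesis .
  qed
  have grQ: "gr p x = gr p z + \<sigma> p * (x - z)" if "p \<in> Q" "\<bar>x - z\<bar> < \<delta>" for p x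
  proof -
    have pz: "\<bar>x - z\<bar> < \<bar>p - z\<bar>" using \<delta>le[OF that(1)] that(2) by simp
    have p1: "p \<le> 1" using that(1) P unfolding Q_def by auto
    show ?thesis
    proof (cases "z < p")
      case True
      hence "x \<le> p" using pz by auto
      thus ?thesis using True p1 by (simp add: gr_left \<sigma>_def algebra_simps)
    next
      case False
      hence "p < z" using that(1) unfolding Q_def by auto
      hence "p \<le> x" using pz by auto
      thus ?thesis using \<open>p < z\<close> by (simp add: gr_right \<sigma>_def algebra_simps)
    qed
  qed
  have sumQ: "(\<Sum>p\<in>Q. gr p x) = (\<Sum>p\<in>Q. gr p z) + (\<Sum>p\<in>Q. \<sigma> p) * (x - z)" if "\<bar>x - z\<bar> < \<delta>" for x
    using grQ[OF _ that] by (simp add: sum.distrib sum_distrib_right)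
  have z01: "z \<in> {0..1}" using z by auto
  have actv: "F x \<le> F z + of_int v * (x - z)" if "a v + z * of_int v = F z" "x \<in> {0..1}" for v x
  proof -
    have "F x \<le> a v + x * of_int v" using le_line[OF that(2)] .
    also have "\<dots> = (a v + z * of_int v) + of_int v * (x - z)" by (simp add: algebra_simps)
    finally show ?thesis using that(1) by simp
  qed
  show ?thesis
  proof (cases "z \<in> P")
    case False
    hence QP: "Q = P" unfolding Q_def by auto
    obtain v where v: "a v + z * of_int v = F z" using attain[OF z] by blast
    define m where "m = of_int v - (\<Sum>p\<in>Q. \<sigma> p)"
    show ?thesis
    proof (rule exI[of _ m], rule exI[of _ \<delta>], rule exI[of _ "v - int cnt"], intro conjI \<delta>pos ballI impI)
      show "m = of_int (v - int cnt) + (\<Sum>p\<in>P. p)" using sig_sum QP by (simp add: m_def)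
      fix x assume x: "x \<in> {0..1}" "\<bar>x - z\<bar> < \<delta>"
      have "R P x = F x - (\<Sum>p\<in>Q. gr p x)" unfolding R_def QP ..
      also have "\<dots> \<le> F z + of_int v * (x - z) - ((\<Sum>p\<in>Q. gr p z) + (\<Sum>p\<in>Q. \<sigma> p) * (x - z))"
        using actv[OF v x(1)] sumQ[OF x(2)] by linarith
      also have "\<dots> = R P z + m * (x - z)" unfolding R_def QP m_def by (simp add: algebra_simps)
      finally show "R P x \<le> R P z + m * (x - z)" .
    qed
  next
    case True
    obtain l r where l: "a l + z * of_int l = F z" and r: "a r + z * of_int r = F z" and rl: "r < l"
      using kink[OF z] nd True by blast
    define m where "m = of_int r - (\<Sum>p\<in>Q. \<sigma> p) + z"
    have sumP: "(\<Sum>p\<in>P. f p) = f z + (\<Sum>p\<in>Q. f p)" for f :: "real \<Rightarrow> real"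
      unfolding Q_def using fin True by (simp add: sum.remove)
    show ?thesis
    proof (rule exI[of _ m], rule exI[of _ \<delta>], rule exI[of _ "r - int cnt"], intro conjI \<delta>pos ballI impI)
      show "m = of_int (r - int cnt) + (\<Sum>p\<in>P. p)" unfolding m_def sig_sum sumP[of "\<lambda>x. x"] by simp
      fix x assume x: "x \<in> {0..1}" "\<bar>x - z\<bar> < \<delta>"
      have Rx: "R P x = F x - gr z x - (\<Sum>p\<in>Q. gr p x)" unfolding R_def sumP by simp
      have Rz: "R P z = F z - gr z z - (\<Sum>p\<in>Q. gr p z)" unfolding R_def sumP by simp
      show "R P x \<le> R P z + m * (x - z)"
      proof (cases "z \<le> x")
        case True
        have "gr z x = gr z z - z * (x - z)" using True by (simp add: gr_right algebra_simps)
        hence "R P x \<le> F z + of_int r * (x - z) - (gr z z - z * (x - z)) - ((\<Sum>p\<in>Q. gr p z) + (\<Sum>p\<in>Q. \<sigma> p) * (x - z))"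
          using Rx actv[OF r x(1)] sumQ[OF x(2)] by linarith
        also have "\<dots> = R P z + m * (x - z)" unfolding Rz m_def by (simp add: algebra_simps)
        finally show ?thesis .
      next
        case False
        have z1: "z \<le> 1" using z by auto
        have "gr z x = gr z z + (1 - z) * (x - z)" using False z1 by (simp add: gr_left algebra_simps)
        moreover have "of_int l * (x - z) \<le> (of_int r + 1) * (x - z)"
        proof -
          have "of_int r + 1 \<le> (of_int l :: real)" using rl by linarith
          thus ?thesis using False by (intro mult_right_mono_neg) auto
        qed
        ultimately have "R P x \<le> F z + (of_int r + 1) * (x - z) - (gr z z + (1 - z) * (x - z)) - ((\<Sum>p\<in>Q. gr p z) + (\<Sum>p\<in>Q. \<sigma> p) * (x - z))"
          using Rx actv[OF l x(1)] sumQ[OF x(2)] by linarith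
        also have "\<dots> = R P z + m * (x - z)" unfolding Rz m_def by (simp add: algebra_simps)
        finally show ?thesis .
      qed
    qed
  qed
qed

end

lemma sup_left:
  fixes q h Rx R0 Rq m :: real
  assumes q: "q > 0" and h: "h > 0" and c: "Rx * q \<ge> R0 * h + Rq * (q - h)" and l: "Rx \<le> Rq - m * h"
  shows "R0 \<le> Rq - m * q"
proof -
  have "q * Rx \<le> q * (Rq - m * h)" using l q by (intro mult_left_mono) auto
  hence "R0 * h \<le> (Rq - m * q) * h" using c by (simp add: algebra_simps)
  thus ?thesis using h by simp
qed

lemma sup_right:
  fixes q h Rx R1 Rq m :: real
  assumes q: "q < 1" and h: "h > 0" and c: "Rx * (1 - q) \<ge> Rq * (1 - q - h) + R1 * h" and l: "Rx \<le> Rq + m * h"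
  shows "R1 \<le> Rq + m * (1 - q)"
proof -
  have "(1 - q) * Rx \<le> (1 - q) * (Rq + m * h)" using l q by (intro mult_left_mono) auto
  hence "R1 * h \<le> (Rq + m * (1 - q)) * h" using c by (simp add: algebra_simps)
  thus ?thesis using h by simp
qed

context tropF begin

lemma R_chord:
  assumes fin: "finite P" and P: "P \<subseteq> {0<..<1}" and nd: "\<forall>p\<in>P. \<not> F differentiable (at p)"
    and ab: "0 \<le> \<alpha>" "\<alpha> < \<beta>" "\<beta> \<le> 1" and t: "t \<in> {\<alpha>..\<beta>}"
  shows "R P t * (\<beta> - \<alpha>) \<ge> R P \<alpha> * (\<beta> - t) + R P \<beta> * (t - \<alpha>)"
proof (rule chord_from_local[OF ab(2) _ _ t])
  show "continuous_on {\<alpha>..\<beta>} (R P)"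
    using R_cont[OF fin] by (rule continuous_on_subset) (use ab in auto)
  fix z assume z: "z \<in> {\<alpha><..<\<beta>}"
  hence z': "z \<in> {0<..<1}" using ab by auto
  obtain m \<delta> k where "\<delta> > 0" "\<forall>x\<in>{0..1}. \<bar>x - z\<bar> < \<delta> \<longrightarrow> R P x \<le> R P z + m * (x - z)"
    using R_loc[OF fin P nd z'] by blast
  thus "\<exists>m \<delta>. \<delta> > 0 \<and> (\<forall>x\<in>{\<alpha>..\<beta>}. \<bar>x - z\<bar> < \<delta> \<longrightarrow> R P x \<le> R P z + m * (x - z))"
    using ab by (intro exI[of _ m] exI[of _ \<delta>]) auto
qed

lemma lower:
  assumes fin: "finite P" and P: "P \<subseteq> {0<..<1}" and nd: "\<forall>p\<in>P. \<not> F differentiable (at p)"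
    and z: "z \<in> {0..1}"
  shows "F z \<ge> HP P z"
proof -
  define q where "q = qf P"
  have q01: "q \<in> {0..<1}" unfolding q_def by (rule qf_range)
  have P01: "\<And>p. p \<in> P \<Longrightarrow> p \<in> {0..1}" using P by auto
  have R0: "R P 0 = 0" unfolding R_def using F0 P01 by (simp add: gr_0)
  have R1: "R P 1 = 0" unfolding R_def using F1 P01 by (simp add: gr_1)
  have main: "R P z \<ge> gr q z"
  proof (cases "q = 0")
    case True
    have "R P z * (1 - 0) \<ge> R P 0 * (1 - z) + R P 1 * (z - 0)"
      by (rule R_chord[OF fin P nd]) (use z in auto)
    hence "R P z \<ge> 0" using R0 R1 by simp
    moreover have "gr q z \<le> 0" using True z by (simp add: gr_def)
    ultimately show ?thesis by simp
  next
    case False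
    hence q0: "q > 0" and q1: "q < 1" using q01 by auto
    have qI: "q \<in> {0<..<1}" using q0 q1 by auto
    obtain m \<delta> k where \<delta>: "\<delta> > 0" and mk: "m = of_int k + (\<Sum>p\<in>P. p)"
      and loc: "\<forall>x\<in>{0..1}. \<bar>x - q\<bar> < \<delta> \<longrightarrow> R P x \<le> R P q + m * (x - q)"
      using R_loc[OF fin P nd qI] by blast
    define h where "h = min (\<delta>/2) (q/2)"
    have h1: "h \<le> \<delta>/2" unfolding h_def by (rule min.cobounded1)
    have h2: "h \<le> q/2" unfolding h_def by (rule min.cobounded2)
    have h0: "h > 0" unfolding h_def using \<delta> q0 by auto
    have "R P (q - h) * (q - 0) \<ge> R P 0 * (q - (q - h)) + R P q * ((q - h) - 0)"
      by (rule R_chord[OF fin P nd]) (use q0 q1 h0 h2 in auto)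
    hence c1: "R P (q - h) * q \<ge> R P 0 * h + R P q * (q - h)" by simp
    have mem1: "q - h \<in> {0..1}" "\<bar>(q - h) - q\<bar> < \<delta>" using q0 q1 h0 h1 h2 \<delta> by auto
    have "R P (q - h) \<le> R P q + m * ((q - h) - q)"
      using loc mem1 by blast
    hence l1: "R P (q - h) \<le> R P q - m * h" by (simp add: algebra_simps)
    have A: "0 \<le> R P q - m * q" using sup_left[OF q0 h0 c1 l1] R0 by simp
    define h' where "h' = min (\<delta>/2) ((1 - q)/2)"
    have h1': "h' \<le> \<delta>/2" unfolding h'_def by (rule min.cobounded1)
    have h2': "h' \<le> (1 - q)/2" unfolding h'_def by (rule min.cobounded2)
    have h0': "h' > 0" unfolding h'_def using \<delta> q1 by auto
    have "R P (q + h') * (1 - q) \<ge> R P q * (1 - (q + h')) + R P 1 * ((q + h') - q)"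
      by (rule R_chord[OF fin P nd]) (use q0 q1 h0' h2' in auto)
    hence c2: "R P (q + h') * (1 - q) \<ge> R P q * (1 - q - h') + R P 1 * h'" by (simp add: algebra_simps)
    have mem2: "q + h' \<in> {0..1}" "\<bar>(q + h') - q\<bar> < \<delta>" using q0 q1 h0' h1' h2' \<delta> by auto
    have "R P (q + h') \<le> R P q + m * ((q + h') - q)"
      using loc mem2 by blast
    hence l2: "R P (q + h') \<le> R P q + m * h'" by simp
    have B: "0 \<le> R P q + m * (1 - q)" using sup_right[OF q1 h0' c2 l2] R1 by simp
    have "m + q = of_int (k - floor (- (\<Sum>p\<in>P. p)))"
      using mk qf_int[of P] unfolding q_def by simp
    then obtain j :: int where j: "m = of_int j - q" by (metis add_diff_cancel_right')
    have Rq: "R P q \<ge> q * (1 - q)"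
    proof (cases "j \<ge> 1")
      case True
      hence "m \<ge> 1 - q" using j by simp
      hence "m * q \<ge> (1 - q) * q" using q0 by (intro mult_right_mono) auto
      thus ?thesis using A by (simp add: algebra_simps)
    next
      case False
      hence "j \<le> 0" by simp
      hence "- m \<ge> q" using j by simp
      hence "(- m) * (1 - q) \<ge> q * (1 - q)" using q1 by (intro mult_right_mono) auto
      thus ?thesis using B by (simp add: algebra_simps)
    qed
    show ?thesis
    proof (cases "z \<le> q")
      case True
      have "R P z * (q - 0) \<ge> R P 0 * (q - z) + R P q * (z - 0)"
        by (rule R_chord[OF fin P nd]) (use q0 q1 z True in auto)
      hence "R P z * q \<ge> R P q * z" using R0 by simp
      moreover have "R P q * z \<ge> q * (1 - q) * z" using Rq z by (intro mult_right_mono) auto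
      ultimately have "q * R P z \<ge> q * ((1 - q) * z)" by (simp add: algebra_simps)
      hence "R P z \<ge> (1 - q) * z" using q0 by simp
      thus ?thesis by (simp add: gr_def)
    next
      case False
      have "R P z * (1 - q) \<ge> R P q * (1 - z) + R P 1 * (z - q)"
        by (rule R_chord[OF fin P nd]) (use q0 q1 z False in auto)
      hence "R P z * (1 - q) \<ge> R P q * (1 - z)" using R1 by simp
      moreover have "R P q * (1 - z) \<ge> q * (1 - q) * (1 - z)" using Rq z by (intro mult_right_mono) auto
      ultimately have "(1 - q) * R P z \<ge> (1 - q) * (q * (1 - z))" by (simp add: algebra_simps)
      hence "R P z \<ge> q * (1 - z)" using q1 by simp
      thus ?thesis by (simp add: gr_def)
    qed
  qed
  thus ?thesis unfolding HP_def R_def q_def by simp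
qed

end

lemma G_eq:
  assumes fin: "finite P" and P: "P \<subseteq> {0<..<1}" and z: "z \<in> {0..1}"
  shows "G 0 1 P z = HP P z"
  unfolding G_def
proof (rule cInf_eq_minimum)
  show "HP P z \<in> {F z |F. tropical_series 0 1 F \<and> (\<forall>p\<in>P. \<not> F differentiable at p)}"
    using HP_trop[OF fin P] HP_nondiff[OF fin P] by blast
  fix y assume "y \<in> {F z |F. tropical_series 0 1 F \<and> (\<forall>p\<in>P. \<not> F differentiable at p)}"
  then obtain F where y: "y = F z" and T: "tropical_series 0 1 F" and nd: "\<forall>p\<in>P. \<not> F differentiable at p"
    by blast
  from T obtain a where nn: "\<forall>z\<in>{0..1}. F z \<ge> 0" and F0: "F 0 = 0" and F1: "F 1 = 0"
    and rep: "\<forall>z\<in>{0..1}. bdd_below (range (\<lambda>v. a v + z * real_of_int v)) \<and> F z = (INF v. a v + z * real_of_int v)"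
    unfolding tropical_series_def by blast
  interpret tropF F a
    by unfold_locales (use nn F0 F1 rep in auto)
  show "HP P z \<le> y" using lower[OF fin P nd z] y by simp
qed

lemma min_sum_pos:
  fixes A B C D L :: real
  assumes "A + C > L" "A + D > L" "B + C > L" "B + D > L"
  shows "min A B + min C D > L"
  using assms by (auto simp: min_def)

lemma diff_set:
  assumes p: "p \<in> {0<..<1}" and q: "q \<in> {0..<1}" and pq: "p \<noteq> q"
    and x: "x \<in> {0..1}"
  shows "(gr p x + gr (frac (q - p)) x \<noteq> gr q x) \<longleftrightarrow>
         (if p < q then x \<in> {0<..<q} else x \<in> {q<..<1})"
proof (cases "p < q")
  case True
  define q' where "q' = q - p"
  have fq: "frac (q - p) = q'" unfolding q'_def using True q p by (simp add: frac_eq)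
  have q'0: "q' > 0" "q' < q" using True p unfolding q'_def by auto
  show ?thesis
  proof (cases "x \<in> {0<..<q}")
    case True
    hence x0: "x > 0" "x < q" by auto
    have glq: "gr q x = (1 - q) * x" using x0 q by (simp add: gr_left)
    have "min ((1 - p) * x) (p * (1 - x)) + min ((1 - q') * x) (q' * (1 - x)) > (1 - q) * x"
    proof (rule min_sum_pos)
      show "(1 - p) * x + (1 - q') * x > (1 - q) * x"
        using x0 unfolding q'_def by (simp add: algebra_simps)
      have "(1 - p) * x + q' * (1 - x) - (1 - q) * x = q'" unfolding q'_def by (simp add: algebra_simps)
      thus "(1 - p) * x + q' * (1 - x) > (1 - q) * x" using q'0 by linarith
      have "p * (1 - x) + (1 - q') * x - (1 - q) * x = p" unfolding q'_def by (simp add: algebra_simps)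
      thus "p * (1 - x) + (1 - q') * x > (1 - q) * x" using p by auto
      have "p * (1 - x) + q' * (1 - x) - (1 - q) * x = q - x" unfolding q'_def by (simp add: algebra_simps)
      thus "p * (1 - x) + q' * (1 - x) > (1 - q) * x" using x0 by linarith
    qed
    hence "gr p x + gr (frac (q - p)) x \<noteq> gr q x" unfolding fq glq by (simp add: gr_def)
    thus ?thesis using True \<open>p < q\<close> by simp
  next
    case False
    hence "x = 0 \<or> x \<ge> q" using x by auto
    hence "gr p x + gr (frac (q - p)) x = gr q x"
    proof
      assume "x = 0" thus ?thesis using p q q'0 fq by (simp add: gr_0)
    next
      assume xq: "x \<ge> q"
      have "gr p x + gr q' x = p * (1 - x) + q' * (1 - x)"
        using xq q'0 True by (simp add: gr_right)
      also have "\<dots> = q * (1 - x)" unfolding q'_def by (simp add: algebra_simps)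
      also have "\<dots> = gr q x" using xq by (simp add: gr_right)
      finally show ?thesis unfolding fq .
    qed
    thus ?thesis using False \<open>p < q\<close> by simp
  qed
next
  case False
  hence pq': "q < p" using pq by auto
  define q' where "q' = q - p + 1"
  have fq: "frac (q - p) = q'" unfolding q'_def using pq' q p
    by (simp add: frac_unique_iff)
  have q'0: "q' > q" "q' < 1" using pq' p unfolding q'_def by auto
  show ?thesis
  proof (cases "x \<in> {q<..<1}")
    case True
    hence x0: "x > q" "x < 1" by auto
    have glq: "gr q x = q * (1 - x)" using x0 by (simp add: gr_right)
    have "min ((1 - p) * x) (p * (1 - x)) + min ((1 - q') * x) (q' * (1 - x)) > q * (1 - x)"
    proof (rule min_sum_pos)
      have "(1 - p) * x + (1 - q') * x - q * (1 - x) = x - q" unfolding q'_def by (simp add: algebra_simps)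
      thus "(1 - p) * x + (1 - q') * x > q * (1 - x)" using x0 by linarith
      have "(1 - p) * x + q' * (1 - x) - q * (1 - x) = 1 - p" unfolding q'_def by (simp add: algebra_simps)
      thus "(1 - p) * x + q' * (1 - x) > q * (1 - x)" using p by auto
      have "(p - q) * (1 - x) > 0" using pq' x0 by auto
      moreover have "(1 - q') * x \<ge> 0" using q'0 x0 q by auto
      moreover have "p * (1 - x) + (1 - q') * x - q * (1 - x) = (p - q) * (1 - x) + (1 - q') * x"
        by (simp add: algebra_simps)
      ultimately show "p * (1 - x) + (1 - q') * x > q * (1 - x)" by linarith
      have "p * (1 - x) + q' * (1 - x) - q * (1 - x) = 1 - x" unfolding q'_def by (simp add: algebra_simps)
      thus "p * (1 - x) + q' * (1 - x) > q * (1 - x)" using x0 by linarith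
    qed
    hence "gr p x + gr (frac (q - p)) x \<noteq> gr q x" unfolding fq glq by (simp add: gr_def)
    thus ?thesis using True \<open>\<not> p < q\<close> by simp
  next
    case False
    hence "x = 1 \<or> x \<le> q" using x by auto
    hence "gr p x + gr (frac (q - p)) x = gr q x"
    proof
      assume "x = 1" thus ?thesis using p q q'0 fq by (simp add: gr_1)
    next
      assume xq: "x \<le> q"
      have "gr p x + gr q' x = (1 - p) * x + (1 - q') * x"
        using xq q'0 pq' p by (simp add: gr_left)
      also have "\<dots> = (1 - q) * x" unfolding q'_def by (simp add: algebra_simps)
      also have "\<dots> = gr q x" using xq q by (simp add: gr_left)
      finally show ?thesis unfolding fq .
    qed
    thus ?thesis using False \<open>\<not> p < q\<close> by simp
  qed
qed

lemma part1:
  fixes n :: nat and p :: "nat \<Rightarrow> real"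
  assumes p01: "\<forall>i\<in>{1..n+1}. p i \<in> {0<..<1}" and inj: "inj_on p {1..n+1}"
    and ne: "p (n+1) \<noteq> frac (- (\<Sum>i=1..n. p i))"
  shows "{x\<in>{0..1}. G 0 1 (p ` {1..n+1}) x \<noteq> G 0 1 (p ` {1..n}) x} =
           (if p (n+1) < frac (- (\<Sum>i=1..n. p i)) then {0<..<frac (- (\<Sum>i=1..n. p i))}
            else {frac (- (\<Sum>i=1..n. p i))<..<1})"
proof -
  define P where "P = p ` {1..n}"
  define q where "q = frac (- (\<Sum>i=1..n. p i))"
  have P01: "P \<subseteq> {0<..<1}" using p01 unfolding P_def by auto
  have finP: "finite P" unfolding P_def by simp
  have pn: "p (n+1) \<in> {0<..<1}" using p01 by auto
  have P': "p ` {1..n+1} = insert (p (n+1)) P"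
  proof -
    have "{1..n+1} = insert (n+1) {1..n}" by auto
    thus ?thesis by (simp add: P_def)
  qed
  have notin: "p (n+1) \<notin> P"
  proof
    assume "p (n+1) \<in> P"
    then obtain i where i: "i \<in> {1..n}" "p (n+1) = p i" unfolding P_def by auto
    hence "n + 1 = i" using inj by (auto simp: inj_on_def)
    thus False using i by auto
  qed
  have P'01: "insert (p (n+1)) P \<subseteq> {0<..<1}" using P01 pn by auto
  have sumP: "(\<Sum>x\<in>P. x) = (\<Sum>i=1..n. p i)" unfolding P_def
    by (subst sum.reindex) (auto intro: inj_on_subset[OF inj])
  have qP: "qf P = q" unfolding qf_def q_def sumP ..
  have qP': "qf (insert (p (n+1)) P) = frac (q - p (n+1))"
  proof -
    have s: "(\<Sum>x\<in>insert (p (n+1)) P. x) = p (n+1) + (\<Sum>i=1..n. p i)"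
      using finP notin sumP by simp
    have "- (p (n+1) + (\<Sum>i=1..n. p i)) = - (\<Sum>i=1..n. p i) - p (n+1)" by simp
    hence "qf (insert (p (n+1)) P) = frac (- (\<Sum>i=1..n. p i) - p (n+1))"
      unfolding qf_def s by metis
    also have "\<dots> = frac ((- (\<Sum>i=1..n. p i) - p (n+1)) - of_int (floor (- (\<Sum>i=1..n. p i))))"
      by (simp only: frac_def floor_diff_of_int)
    also have "(- (\<Sum>i=1..n. p i) - p (n+1)) - of_int (floor (- (\<Sum>i=1..n. p i))) = q - p (n+1)"
      unfolding q_def frac_def by simp
    finally show ?thesis .
  qed
  have q01: "q \<in> {0..<1}" unfolding q_def by (simp add: frac_lt_1)
  have eq: "(G 0 1 (p ` {1..n+1}) x \<noteq> G 0 1 (p ` {1..n}) x) \<longleftrightarrow>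
            (gr (p (n+1)) x + gr (frac (q - p (n+1))) x \<noteq> gr q x)" if x: "x \<in> {0..1}" for x
  proof -
    have "G 0 1 (p ` {1..n+1}) x = HP (insert (p (n+1)) P) x"
      unfolding P' by (rule G_eq[OF _ P'01 x]) (simp add: finP)
    also have "\<dots> = (\<Sum>b\<in>P. gr b x) + gr (p (n+1)) x + gr (frac (q - p (n+1))) x"
      unfolding HP_def qP' using finP notin by simp
    finally have A: "G 0 1 (p ` {1..n+1}) x = (\<Sum>b\<in>P. gr b x) + gr (p (n+1)) x + gr (frac (q - p (n+1))) x" .
    have B: "G 0 1 (p ` {1..n}) x = (\<Sum>b\<in>P. gr b x) + gr q x"
      using G_eq[OF finP P01 x] qP unfolding HP_def by (simp add: P_def)
    show ?thesis unfolding A B by auto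
  qed
  have key: "(G 0 1 (p ` {1..n+1}) x \<noteq> G 0 1 (p ` {1..n}) x) \<longleftrightarrow>
      (if p (n+1) < q then x \<in> {0<..<q} else x \<in> {q<..<1})" if x: "x \<in> {0..1}" for x
    using diff_set[OF pn q01 ne[folded q_def] x] eq[OF x] by simp
  have "{x\<in>{0..1}. G 0 1 (p ` {1..n+1}) x \<noteq> G 0 1 (p ` {1..n}) x} =
           (if p (n+1) < q then {0<..<q} else {q<..<1})"
  proof (rule set_eqI)
    fix x
    show "(x \<in> {x\<in>{0..1}. G 0 1 (p ` {1..n+1}) x \<noteq> G 0 1 (p ` {1..n}) x}) \<longleftrightarrow>
          (x \<in> (if p (n+1) < q then {0<..<q} else {q<..<1}))"
    proof (cases "x \<in> {0..1}")
      case True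
      then show ?thesis using key[OF True] by auto
    next
      case False
      then show ?thesis using q01 by auto
    qed
  qed
  thus ?thesis unfolding q_def .
qed

lemma int_id:
  assumes t: "0 \<le> (t::real)"
  shows "(\<integral>\<^sup>+ x. ennreal x * indicator {0..t} x \<partial>lborel) = ennreal (t^2/2)"
proof -
  have "((\<lambda>x. x) has_integral ((\<lambda>x. x^2/2) t - (\<lambda>x. x^2/2) 0)) {0..t}"
  proof (rule fundamental_theorem_of_calculus[OF t])
    fix x :: real assume "x \<in> {0..t}"
    have "((\<lambda>x. x^2/2) has_real_derivative x) (at x within {0..t})"
      by (rule derivative_eq_intros | simp)+
    thus "((\<lambda>x. x^2/2) has_vector_derivative x) (at x within {0..t})"
      by (simp add: has_real_derivative_iff_has_vector_derivative)
  qed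
  hence "((\<lambda>x. x) has_integral (t^2/2)) {0..t}" by simp
  thus ?thesis by (intro nn_integral_has_integral_lebesgue') auto
qed

lemma int_2x:
  assumes t: "0 \<le> (t::real)"
  shows "(\<integral>\<^sup>+ x. ennreal (2*x) * indicator {0..t} x \<partial>lborel) = ennreal (t^2)"
proof -
  have "((\<lambda>x. 2*x) has_integral ((\<lambda>x. x^2) t - (\<lambda>x. x^2) 0)) {0..t}"
  proof (rule fundamental_theorem_of_calculus[OF t])
    fix x :: real assume "x \<in> {0..t}"
    have "((\<lambda>x. x^2) has_real_derivative 2*x) (at x within {0..t})"
      by (rule derivative_eq_intros | simp)+
    thus "((\<lambda>x. x^2) has_vector_derivative 2*x) (at x within {0..t})"
      by (simp add: has_real_derivative_iff_has_vector_derivative)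
  qed
  hence "((\<lambda>x. 2*x) has_integral (t^2)) {0..t}" by simp
  thus ?thesis by (intro nn_integral_has_integral_lebesgue') auto
qed

lemma int_1m:
  assumes t: "0 \<le> (t::real)" "t \<le> 1"
  shows "(\<integral>\<^sup>+ x. ennreal (1 - x) * indicator {1-t..1} x \<partial>lborel) = ennreal (t^2/2)"
proof -
  have le: "1 - t \<le> 1" using t by simp
  have X: "((\<lambda>x. 1 - x) has_integral ((\<lambda>x. x - x^2/2) 1 - (\<lambda>x. x - x^2/2) (1-t))) {1-t..1}"
  proof (rule fundamental_theorem_of_calculus[OF le])
    fix x :: real assume "x \<in> {1-t..1}"
    have "((\<lambda>x. x - x^2/2) has_real_derivative (1 - x)) (at x within {1-t..1})"
      by (rule derivative_eq_intros | simp)+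
    thus "((\<lambda>x. x - x^2/2) has_vector_derivative (1 - x)) (at x within {1-t..1})"
      by (simp add: has_real_derivative_iff_has_vector_derivative)
  qed
  have E: "(\<lambda>x. x - x^2/2) 1 - (\<lambda>x. x - x^2/2) (1-t) = t^2/2"
    by (simp add: power2_eq_square field_simps)
  have "((\<lambda>x. 1 - x) has_integral (t^2/2)) {1-t..1}" using X unfolding E .
  thus ?thesis by (intro nn_integral_has_integral_lebesgue') auto
qed

lemma borel_measurable_frac[measurable]: "(frac :: real \<Rightarrow> real) \<in> borel_measurable borel"
proof -
  have "(\<lambda>x::real. x - real_of_int \<lfloor>x\<rfloor>) \<in> borel_measurable borel"
    by (intro borel_measurable_diff borel_measurable_real_floor) simp
  thus ?thesis by (simp add: frac_def[abs_def])
qed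

abbreviation U :: "real measure" where "U \<equiv> uniform_measure lborel {0<..<(1::real)}"

lemma U_prob: "prob_space U"
  by (rule prob_space_uniform_measure) auto

lemma nn_integral_U:
  assumes [measurable]: "f \<in> borel_measurable borel"
  shows "(\<integral>\<^sup>+ x. f x \<partial>U) = (\<integral>\<^sup>+ x. f x * indicator {0<..<1} x \<partial>lborel)"
  by (subst nn_integral_uniform_measure) (auto simp: divide_ennreal_def)

definition psi :: "real \<Rightarrow> real \<Rightarrow> ennreal" where
  "psi t q = ennreal q * indicator {..t} q + ennreal (1 - q) * indicator {1-t..} q"

lemma psi_measurable[measurable]: "psi t \<in> borel_measurable borel"
  unfolding psi_def by measurable

definition cdfv :: "real \<Rightarrow> real" where
  "cdfv t = (if t < 0 then 0 else (min t 1)^2)"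

lemma int_psi: "(\<integral>\<^sup>+ q. psi t q \<partial>U) = ennreal (cdfv t)"
proof (cases "t < 0")
  case True
  have "(\<integral>\<^sup>+ q. psi t q \<partial>U) = (\<integral>\<^sup>+ q. psi t q * indicator {0<..<1} q \<partial>lborel)"
    by (rule nn_integral_U) measurable
  also have "\<dots> = (\<integral>\<^sup>+ q. (0::ennreal) \<partial>(lborel::real measure))"
    using True by (intro nn_integral_cong) (auto simp: psi_def indicator_def)
  finally show ?thesis using True by (simp add: cdfv_def)
next
  case False
  define \<tau> where "\<tau> = min t 1"
  have \<tau>: "0 \<le> \<tau>" "\<tau> \<le> 1" using False unfolding \<tau>_def by auto
  have "(\<integral>\<^sup>+ q. psi t q \<partial>U) = (\<integral>\<^sup>+ q. psi t q * indicator {0<..<1} q \<partial>lborel)"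
    by (rule nn_integral_U) measurable
  also have "\<dots> = (\<integral>\<^sup>+ q. ennreal q * indicator {0..\<tau>} q + ennreal (1 - q) * indicator {1-\<tau>..1} q \<partial>lborel)"
  proof (rule nn_integral_cong_AE)
    show "AE q in lborel. psi t q * indicator {0<..<1} q = ennreal q * indicator {0..\<tau>} q + ennreal (1 - q) * indicator {1-\<tau>..1} q"
      using AE_lborel_singleton[of "0::real"] AE_lborel_singleton[of "1::real"]
    proof eventually_elim
      case (elim q)
      show ?case using elim False unfolding psi_def \<tau>_def
        by (auto simp: indicator_def min_def)
    qed
  qed
  also have "\<dots> = (\<integral>\<^sup>+ q. ennreal q * indicator {0..\<tau>} q \<partial>lborel) + (\<integral>\<^sup>+ q. ennreal (1 - q) * indicator {1-\<tau>..1} q \<partial>lborel)"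
    by (rule nn_integral_add) auto
  also have "\<dots> = ennreal (\<tau>^2/2) + ennreal (\<tau>^2/2)"
    using int_id[OF \<tau>(1)] int_1m[OF \<tau>] by simp
  also have "\<dots> = ennreal (\<tau>^2)" by (simp flip: ennreal_plus)
  finally show ?thesis using False unfolding cdfv_def \<tau>_def by simp
qed

lemma emeasure_U: "A \<in> sets borel \<Longrightarrow> emeasure U A = emeasure lborel ({0<..<1} \<inter> A)"
  by (subst emeasure_uniform_measure) (auto simp: divide_ennreal_def)

lemma inner_int:
  assumes q: "q \<in> {0..1}"
  shows "(\<integral>\<^sup>+ y. indicator {..t} (if y < q then q else 1 - q) \<partial>U) = psi t q"
proof -
  have "(\<integral>\<^sup>+ y. indicator {..t} (if y < q then q else 1 - q) \<partial>U) =
        (\<integral>\<^sup>+ y. indicator {..t} q * indicator {..<q} y + indicator {..t} (1 - q) * indicator {q..} y \<partial>U)"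
    by (intro nn_integral_cong) (auto simp: indicator_def)
  also have "\<dots> = indicator {..t} q * emeasure U {..<q} + indicator {..t} (1 - q) * emeasure U {q..}"
    by (subst nn_integral_add) (auto simp: nn_integral_cmult_indicator)
  also have "emeasure U {..<q} = ennreal q"
  proof -
    have "{0<..<1} \<inter> {..<q} = {0<..<q}" using q by auto
    thus ?thesis using q by (simp add: emeasure_U divide_ennreal_def)
  qed
  also have "emeasure U {q..} = ennreal (1 - q)"
  proof (cases "q = 0")
    case True
    have "{0<..<1} \<inter> {q..} = {0<..<(1::real)}" using True by auto
    thus ?thesis using True by (simp add: emeasure_U divide_ennreal_def)
  next
    case False
    have "{0<..<1} \<inter> {q..} = {q..<1}" using q False by auto
    thus ?thesis using q by (simp add: emeasure_U divide_ennreal_def)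
  qed
  finally show ?thesis unfolding psi_def by (simp add: indicator_def mult.commute)
qed

lemma rotation:
  assumes psi[measurable]: "\<psi> \<in> borel_measurable borel"
  shows "(\<integral>\<^sup>+ y. \<psi> (frac (c - y)) \<partial>U) = (\<integral>\<^sup>+ y. \<psi> y \<partial>U)"
proof -
  define c0 where "c0 = frac c"
  have c0: "0 \<le> c0" "c0 < 1" unfolding c0_def by (auto simp: frac_lt_1)
  have fr: "frac (c - y) = (if y \<le> c0 then c0 - y else c0 - y + 1)" if y: "y \<in> {0<..<1}" for y
  proof -
    have "c - y = of_int (floor c) + (c0 - y)" unfolding c0_def frac_def by simp
    hence "frac (c - y) = frac (of_int (floor c) + (c0 - y))" by (rule arg_cong)
    hence "frac (c - y) = frac (c0 - y)" by (simp only: frac_add_of_int_left)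
    also have "\<dots> = (if y \<le> c0 then c0 - y else c0 - y + 1)"
      using y c0 by (auto simp: frac_unique_iff)
    finally show ?thesis .
  qed
  have "(\<integral>\<^sup>+ y. \<psi> (frac (c - y)) \<partial>U) = (\<integral>\<^sup>+ y. \<psi> (frac (c - y)) * indicator {0<..<1} y \<partial>lborel)"
    by (rule nn_integral_U) measurable
  also have "\<dots> = (\<integral>\<^sup>+ y. \<psi> (c0 - y) * indicator {0<..c0} y + \<psi> (c0 + 1 - y) * indicator {c0<..<1} y \<partial>lborel)"
  proof (rule nn_integral_cong)
    fix y :: real
    show "\<psi> (frac (c - y)) * indicator {0<..<1} y = \<psi> (c0 - y) * indicator {0<..c0} y + \<psi> (c0 + 1 - y) * indicator {c0<..<1} y"
    proof (cases "y \<in> {0<..<1}")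
      case True
      then show ?thesis using fr[OF True] c0 by (auto simp: indicator_def algebra_simps)
    next
      case False
      then show ?thesis using c0 by (auto simp: indicator_def)
    qed
  qed
  also have "\<dots> = (\<integral>\<^sup>+ y. \<psi> (c0 - y) * indicator {0<..c0} y \<partial>lborel) + (\<integral>\<^sup>+ y. \<psi> (c0 + 1 - y) * indicator {c0<..<1} y \<partial>lborel)"
    by (rule nn_integral_add) auto
  also have "(\<integral>\<^sup>+ y. \<psi> (c0 - y) * indicator {0<..c0} y \<partial>lborel) = (\<integral>\<^sup>+ x. \<psi> x * indicator {0..<c0} x \<partial>lborel)"
  proof -
    have "(\<integral>\<^sup>+ y. \<psi> (c0 - y) * indicator {0<..c0} y \<partial>lborel) =
          ennreal \<bar>-1\<bar> * (\<integral>\<^sup>+ x. \<psi> (c0 - (c0 + (-1) * x)) * indicator {0<..c0} (c0 + (-1) * x) \<partial>lborel)"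
      by (rule nn_integral_real_affine) auto
    also have "\<dots> = (\<integral>\<^sup>+ x. \<psi> x * indicator {0..<c0} x \<partial>lborel)"
      by (simp, intro nn_integral_cong) (auto simp: indicator_def)
    finally show ?thesis .
  qed
  also have "(\<integral>\<^sup>+ y. \<psi> (c0 + 1 - y) * indicator {c0<..<1} y \<partial>lborel) = (\<integral>\<^sup>+ x. \<psi> x * indicator {c0<..<1} x \<partial>lborel)"
  proof -
    have "(\<integral>\<^sup>+ y. \<psi> (c0 + 1 - y) * indicator {c0<..<1} y \<partial>lborel) =
          ennreal \<bar>-1\<bar> * (\<integral>\<^sup>+ x. \<psi> (c0 + 1 - (c0 + 1 + (-1) * x)) * indicator {c0<..<1} (c0 + 1 + (-1) * x) \<partial>lborel)"
      by (rule nn_integral_real_affine) auto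
    also have "\<dots> = (\<integral>\<^sup>+ x. \<psi> x * indicator {c0<..<1} x \<partial>lborel)"
      by (simp, intro nn_integral_cong) (auto simp: indicator_def)
    finally show ?thesis by simp
  qed
  also have "(\<integral>\<^sup>+ x. \<psi> x * indicator {0..<c0} x \<partial>lborel) + (\<integral>\<^sup>+ x. \<psi> x * indicator {c0<..<1} x \<partial>lborel) =
             (\<integral>\<^sup>+ x. \<psi> x * indicator {0..<c0} x + \<psi> x * indicator {c0<..<1} x \<partial>lborel)"
    by (rule nn_integral_add[symmetric]) auto
  also have "\<dots> = (\<integral>\<^sup>+ x. \<psi> x * indicator {0<..<1} x \<partial>lborel)"
  proof (rule nn_integral_cong_AE)
    show "AE x in lborel. \<psi> x * indicator {0..<c0} x + \<psi> x * indicator {c0<..<1} x = \<psi> x * indicator {0<..<1} x"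
      using AE_lborel_singleton[of "0::real"] AE_lborel_singleton[of "c0"]
    proof eventually_elim
      case (elim x)
      then show ?case using c0 by (auto simp: indicator_def)
    qed
  qed
  also have "\<dots> = (\<integral>\<^sup>+ y. \<psi> y \<partial>U)"
    by (rule nn_integral_U[symmetric]) measurable
  finally show ?thesis .
qed

interpretation PS: product_sigma_finite "\<lambda>_::nat. U"
  by (simp add: product_sigma_finite_def prob_space_imp_sigma_finite U_prob)

lemma PiU_prob: "prob_space (PiM I (\<lambda>_::nat. U))"
  by (rule prob_space_PiM) (rule U_prob)

lemma prod_cdf:
  fixes n :: nat
  assumes n: "n \<ge> 1"
  shows "emeasure (PiM {1..n+1} (\<lambda>_. U))
           {p \<in> space (PiM {1..n+1} (\<lambda>_. U)).
              (if p (n+1) < frac (- (\<Sum>i=1..n. p i)) then frac (- (\<Sum>i=1..n. p i)) else 1 - frac (- (\<Sum>i=1..n. p i))) \<le> t}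
         = ennreal (cdfv t)"
proof -
  define Q where "Q p = frac (- (\<Sum>i=1..n. p i))" for p :: "nat \<Rightarrow> real"
  define Y where "Y p = (if p (n+1) < Q p then Q p else 1 - Q p)" for p :: "nat \<Rightarrow> real"
  have I1: "{1..n+1} = insert (n+1) {1..n}" by auto
  have I2: "{1..n} = insert n {1..n-1}" using n by auto
  have Qm[measurable]: "Q \<in> borel_measurable (PiM I (\<lambda>_. U))" if "{1..n} \<subseteq> I" for I
    unfolding Q_def apply measurable using that by auto
  have Ym[measurable]: "Y \<in> borel_measurable (PiM {1..n+1} (\<lambda>_. U))"
    unfolding Y_def by measurable
  have Q01: "Q p \<in> {0..1}" for p unfolding Q_def by (auto simp: frac_lt_1 less_imp_le)
  have "emeasure (PiM {1..n+1} (\<lambda>_. U)) {p \<in> space (PiM {1..n+1} (\<lambda>_. U)). Y p \<le> t}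
      = (\<integral>\<^sup>+ p. indicator {..t} (Y p) \<partial>PiM {1..n+1} (\<lambda>_. U))"
  proof -
    have Am: "{p \<in> space (PiM {1..n+1} (\<lambda>_. U)). Y p \<le> t} \<in> sets (PiM {1..n+1} (\<lambda>_. U))"
      by measurable
    show ?thesis
      by (subst nn_integral_indicator[OF Am, symmetric]) (auto intro!: nn_integral_cong simp: indicator_def)
  qed
  also have "\<dots> = (\<integral>\<^sup>+ p. indicator {..t} (Y p) \<partial>PiM (insert (n+1) {1..n}) (\<lambda>_. U))"
    unfolding I1 ..
  also have "\<dots> = (\<integral>\<^sup>+ x. (\<integral>\<^sup>+ y. indicator {..t} (Y (x(n+1 := y))) \<partial>U) \<partial>PiM {1..n} (\<lambda>_. U))"
  proof -
    have fm: "(\<lambda>p. indicator {..t} (Y p)) \<in> borel_measurable (PiM (insert (n+1) {1..n}) (\<lambda>_. U))"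
      unfolding I1[symmetric] by measurable
    show ?thesis by (rule PS.product_nn_integral_insert[OF _ _ fm]) auto
  qed
  also have "\<dots> = (\<integral>\<^sup>+ x. psi t (Q x) \<partial>PiM {1..n} (\<lambda>_. U))"
  proof (rule nn_integral_cong)
    fix x assume "x \<in> space (PiM {1..n} (\<lambda>_. U))"
    have QQ: "Q (x(n+1 := y)) = Q x" for y unfolding Q_def by (intro arg_cong[where f=frac] arg_cong[where f=uminus] sum.cong) auto
    have "(\<integral>\<^sup>+ y. indicator {..t} (Y (x(n+1 := y))) \<partial>U) = (\<integral>\<^sup>+ y. indicator {..t} (if y < Q x then Q x else 1 - Q x) \<partial>U)"
      unfolding Y_def QQ by simp
    also have "\<dots> = psi t (Q x)" by (rule inner_int[OF Q01])
    finally show "(\<integral>\<^sup>+ y. indicator {..t} (Y (x(n+1 := y))) \<partial>U) = psi t (Q x)" .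
  qed
  also have "\<dots> = (\<integral>\<^sup>+ x. psi t (Q x) \<partial>PiM (insert n {1..n-1}) (\<lambda>_. U))"
    unfolding I2[symmetric] ..
  also have "\<dots> = (\<integral>\<^sup>+ x. (\<integral>\<^sup>+ y. psi t (Q (x(n := y))) \<partial>U) \<partial>PiM {1..n-1} (\<lambda>_. U))"
  proof -
    have fm: "(\<lambda>p. psi t (Q p)) \<in> borel_measurable (PiM (insert n {1..n-1}) (\<lambda>_. U))"
      unfolding I2[symmetric] using Qm[of "{1..n}"] by measurable
    show ?thesis by (rule PS.product_nn_integral_insert[OF _ _ fm]) auto
  qed
  also have "\<dots> = (\<integral>\<^sup>+ x. ennreal (cdfv t) \<partial>PiM {1..n-1} (\<lambda>_. U))"
  proof (rule nn_integral_cong)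
    fix x assume "x \<in> space (PiM {1..n-1} (\<lambda>_. U))"
    have QQ: "Q (x(n := y)) = frac ((- (\<Sum>i=1..n-1. x i)) - y)" for y
    proof -
      have "(\<Sum>i=1..n. (x(n := y)) i) = y + (\<Sum>i=1..n-1. (x(n := y)) i)"
        unfolding I2 by (subst sum.insert) auto
      also have "(\<Sum>i=1..n-1. (x(n := y)) i) = (\<Sum>i=1..n-1. x i)"
        by (intro sum.cong) auto
      finally have S: "(\<Sum>i=1..n. (x(n := y)) i) = y + (\<Sum>i=1..n-1. x i)" .
      have "- (y + (\<Sum>i=1..n-1. x i)) = (- (\<Sum>i=1..n-1. x i)) - y" by simp
      thus ?thesis unfolding Q_def S by metis
    qed
    have "(\<integral>\<^sup>+ y. psi t (Q (x(n := y))) \<partial>U) = (\<integral>\<^sup>+ y. psi t (frac ((- (\<Sum>i=1..n-1. x i)) - y)) \<partial>U)"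
      unfolding QQ ..
    also have "\<dots> = (\<integral>\<^sup>+ y. psi t y \<partial>U)" by (rule rotation) measurable
    also have "\<dots> = ennreal (cdfv t)" by (rule int_psi)
    finally show "(\<integral>\<^sup>+ y. psi t (Q (x(n := y))) \<partial>U) = ennreal (cdfv t)" .
  qed
  also have "\<dots> = ennreal (cdfv t)"
    using prob_space.emeasure_space_1[OF PiU_prob] by simp
  finally show ?thesis unfolding Y_def Q_def .
qed

lemma null_coord:
  fixes I :: "nat set"
  assumes fin: "finite I" and i: "i \<in> I"
    and g[measurable]: "g \<in> borel_measurable (PiM I (\<lambda>_. U))"
    and gi: "\<And>x y. g (x(i := y)) = g x"
  shows "AE p in PiM I (\<lambda>_. U). p i \<noteq> g p"
proof -
  define N where "N = {p \<in> space (PiM I (\<lambda>_. U)). p i = g p}"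
  have Nm: "N \<in> sets (PiM I (\<lambda>_. U))" unfolding N_def using i by measurable
  have II: "I = insert i (I - {i})" using i by auto
  have "emeasure (PiM I (\<lambda>_. U)) N = (\<integral>\<^sup>+ p. indicator N p \<partial>PiM I (\<lambda>_. U))"
    using Nm by simp
  also have "\<dots> = (\<integral>\<^sup>+ p. indicator N p \<partial>PiM (insert i (I - {i})) (\<lambda>_. U))"
    using II by simp
  also have "\<dots> = (\<integral>\<^sup>+ x. (\<integral>\<^sup>+ y. indicator N (x(i := y)) \<partial>U) \<partial>PiM (I - {i}) (\<lambda>_. U))"
    by (rule PS.product_nn_integral_insert) (use fin Nm II in auto)
  also have "\<dots> = (\<integral>\<^sup>+ x. 0 \<partial>PiM (I - {i}) (\<lambda>_. U))"
  proof (rule nn_integral_cong)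
    fix x assume x: "x \<in> space (PiM (I - {i}) (\<lambda>_. U))"
    have "(\<integral>\<^sup>+ y. indicator N (x(i := y)) \<partial>U) = (\<integral>\<^sup>+ y. indicator {g x} y \<partial>U)"
    proof (rule nn_integral_cong)
      fix y
      have "x(i := y) \<in> space (PiM I (\<lambda>_. U))"
        using x i by (auto simp: space_PiM PiE_def extensional_def)
      thus "indicator N (x(i := y)) = indicator {g x} y"
        unfolding N_def using gi by (auto simp: indicator_def)
    qed
    also have "\<dots> = emeasure U {g x}" by simp
    also have "\<dots> = 0" by (simp add: emeasure_U emeasure_lborel_countable)
    finally show "(\<integral>\<^sup>+ y. indicator N (x(i := y)) \<partial>U) = 0" .
  qed
  also have "\<dots> = 0" by simp
  finally have "emeasure (PiM I (\<lambda>_. U)) N = 0" .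
  thus ?thesis by (subst AE_iff_measurable[OF Nm]) (auto simp: N_def)
qed

lemma meas_completion_AE:
  assumes g: "g \<in> M \<rightarrow>\<^sub>M N" and ae: "AE x in M. f x = g x" and sp: "\<And>x. x \<in> space M \<Longrightarrow> f x \<in> space N"
  shows "f \<in> completion M \<rightarrow>\<^sub>M N"
proof (rule measurableI)
  fix x assume "x \<in> space (completion M)" thus "f x \<in> space N" using sp by simp
next
  fix A assume A: "A \<in> sets N"
  from ae obtain N0 where N0: "{x \<in> space M. \<not> f x = g x} \<subseteq> N0" "emeasure M N0 = 0" "N0 \<in> sets M"
    by (rule AE_E)
  have eq: "f -` A \<inter> space (completion M) = ((g -` A \<inter> space M) - N0) \<union> ((f -` A \<inter> space M) \<inter> N0)"
    using N0(1) by auto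
  have s1: "(g -` A \<inter> space M) - N0 \<in> sets (completion M)"
    using g A N0(3) by (intro sets_completionI_sets) (auto intro!: sets.Diff measurable_sets)
  have "N0 \<in> null_sets (completion M)" using N0 by (intro null_sets_completionI) auto
  hence "(f -` A \<inter> space M) \<inter> N0 \<in> null_sets (completion M)"
    by (rule null_sets_completion_subset[rotated]) auto
  hence s2: "(f -` A \<inter> space M) \<inter> N0 \<in> sets (completion M)" by auto
  show "f -` A \<inter> space (completion M) \<in> sets (completion M)"
    unfolding eq using s1 s2 by auto
qed

lemma cdf_density: "cdf (density lborel (\<lambda>x. ennreal (2 * x) * indicator {0..1} x)) t = cdfv t"
proof -
  have "emeasure (density lborel (\<lambda>x. ennreal (2 * x) * indicator {0..1} x)) {..t} =
        (\<integral>\<^sup>+ x. ennreal (2 * x) * indicator {0..1} x * indicator {..t} x \<partial>lborel)"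
    by (subst emeasure_density) auto
  also have "\<dots> = ennreal (cdfv t)"
  proof (cases "t < 0")
    case True
    have "(\<integral>\<^sup>+ x. ennreal (2 * x) * indicator {0..1} x * indicator {..t} x \<partial>lborel) = (\<integral>\<^sup>+ x. (0::ennreal) \<partial>(lborel::real measure))"
      using True by (intro nn_integral_cong) (auto simp: indicator_def)
    thus ?thesis using True by (simp add: cdfv_def)
  next
    case False
    have "(\<integral>\<^sup>+ x. ennreal (2 * x) * indicator {0..1} x * indicator {..t} x \<partial>lborel) =
          (\<integral>\<^sup>+ x. ennreal (2 * x) * indicator {0..min t 1} x \<partial>lborel)"
      by (intro nn_integral_cong) (auto simp: indicator_def)
    also have "\<dots> = ennreal ((min t 1)^2)" using False by (intro int_2x) auto
    finally show ?thesis using False by (simp add: cdfv_def)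
  qed
  finally show ?thesis unfolding cdf_def measure_def by (simp add: cdfv_def)
qed

lemma density_rd: "real_distribution (density lborel (\<lambda>x. ennreal (2 * x) * indicator {0..1} x))"
  unfolding real_distribution_def real_distribution_axioms_def
proof (intro conjI)
  show "prob_space (density lborel (\<lambda>x. ennreal (2 * x) * indicator {0..1} x))"
  proof (rule prob_spaceI)
    have "emeasure (density lborel (\<lambda>x. ennreal (2 * x) * indicator {0..1} x)) UNIV =
          (\<integral>\<^sup>+ x. ennreal (2 * x) * indicator {0..1} x * indicator UNIV x \<partial>lborel)"
      by (subst emeasure_density) auto
    also have "\<dots> = (\<integral>\<^sup>+ x. ennreal (2 * x) * indicator {0..1} x \<partial>lborel)" by simp
    also have "\<dots> = 1" using int_2x[of 1] by simp
    finally show "emeasure (density lborel (\<lambda>x. ennreal (2 * x) * indicator {0..1} x))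
        (space (density lborel (\<lambda>x. ennreal (2 * x) * indicator {0..1} x))) = 1" by simp
  qed
qed simp

lemma final_dist:
  fixes n :: nat and X :: "(nat \<Rightarrow> real) \<Rightarrow> real"
  assumes n: "n \<ge> 1"
    and XY: "AE p in PiM {1..n+1} (\<lambda>_. U). X p =
       (if p (n+1) < frac (- (\<Sum>i=1..n. p i)) then frac (- (\<Sum>i=1..n. p i)) else 1 - frac (- (\<Sum>i=1..n. p i)))"
  shows "distributed (completion (PiM {1..n+1} (\<lambda>_. U))) lborel X (\<lambda>x. ennreal (2 * x) * indicator {0..1} x)"
proof -
  define M where "M = PiM {1..n+1} (\<lambda>_::nat. U)"
  define Y where "Y p = (if p (n+1) < frac (- (\<Sum>i=1..n. p i)) then frac (- (\<Sum>i=1..n. p i)) else 1 - frac (- (\<Sum>i=1..n. p i)))" for p :: "nat \<Rightarrow> real"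
  have Ym: "Y \<in> M \<rightarrow>\<^sub>M lborel" unfolding Y_def M_def by measurable
  have XY': "AE p in M. X p = Y p" using XY unfolding M_def Y_def .
  have Xm: "X \<in> completion M \<rightarrow>\<^sub>M lborel" by (rule meas_completion_AE[OF Ym XY']) simp
  have d1: "distr (completion M) lborel X = distr M lborel Y"
  proof -
    have "distr (completion M) lborel X = distr (completion M) lborel Y"
      by (rule distr_cong_AE[OF refl refl AE_completion[OF XY'] Xm measurable_completion[OF Ym]])
    also have "\<dots> = distr M lborel Y" by (rule distr_completion[OF Ym])
    finally show ?thesis .
  qed
  interpret MP: prob_space M unfolding M_def by (rule PiU_prob)
  have rd1: "real_distribution (distr M lborel Y)"
    unfolding real_distribution_def real_distribution_axioms_def
    using MP.prob_space_distr[OF Ym] by simp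
  have cdf1: "cdf (distr M lborel Y) t = cdfv t" for t
  proof -
    have "cdf (distr M lborel Y) t = measure M (Y -` {..t} \<inter> space M)"
      unfolding cdf_def by (rule measure_distr[OF Ym]) simp
    also have "Y -` {..t} \<inter> space M = {p \<in> space M. Y p \<le> t}" by auto
    also have "measure M {p \<in> space M. Y p \<le> t} = cdfv t"
      unfolding measure_def M_def Y_def using prod_cdf[OF n, of t]
      by (simp add: cdfv_def)
    finally show ?thesis .
  qed
  have d2: "distr M lborel Y = density lborel (\<lambda>x. ennreal (2 * x) * indicator {0..1} x)"
    by (rule cdf_unique[OF rd1 density_rd]) (simp add: fun_eq_iff cdf1 cdf_density)
  show ?thesis
    unfolding distributed_def M_def[symmetric] d1 d2 using Xm by simp
qed

theorem mainTheorem7: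
  fixes n :: nat
  assumes "n \<ge> 1"
  shows "(\<forall>p :: nat \<Rightarrow> real.
            (\<forall>i\<in>{1..n+1}. p i \<in> {0<..<1}) \<and> inj_on p {1..n+1} \<and>
            p (n+1) \<noteq> frac (- (\<Sum>i=1..n. p i)) \<longrightarrow>
            (let q = frac (- (\<Sum>i=1..n. p i));
                 I = {x\<in>{0..1}. G 0 1 (p ` {1..n+1}) x \<noteq> G 0 1 (p ` {1..n}) x}
             in (p (n+1) < q \<longrightarrow> I = {0<..<q}) \<and> (p (n+1) > q \<longrightarrow> I = {q<..<1})))
       \<and> distributed (completion (PiM {1..n+1} (\<lambda>_. uniform_measure lborel {0<..<(1::real)})))
           lborel
           (\<lambda>p. measure lborel {x\<in>{0..1}. G 0 1 (p ` {1..n+1}) x \<noteq> G 0 1 (p ` {1..n}) x})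
           (\<lambda>x. ennreal (2 * x) * indicator {0..1} x)"
proof (intro conjI allI impI)
  fix p :: "nat \<Rightarrow> real"
  assume H: "(\<forall>i\<in>{1..n+1}. p i \<in> {0<..<1}) \<and> inj_on p {1..n+1} \<and> p (n+1) \<noteq> frac (- (\<Sum>i=1..n. p i))"
  have E: "{x\<in>{0..1}. G 0 1 (p ` {1..n+1}) x \<noteq> G 0 1 (p ` {1..n}) x} =
           (if p (n+1) < frac (- (\<Sum>i=1..n. p i)) then {0<..<frac (- (\<Sum>i=1..n. p i))}
            else {frac (- (\<Sum>i=1..n. p i))<..<1})"
    using part1 H by blast
  show "let q = frac (- (\<Sum>i=1..n. p i));
                 I = {x\<in>{0..1}. G 0 1 (p ` {1..n+1}) x \<noteq> G 0 1 (p ` {1..n}) x}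
             in (p (n+1) < q \<longrightarrow> I = {0<..<q}) \<and> (p (n+1) > q \<longrightarrow> I = {q<..<1})"
    unfolding Let_def E by auto
next
  define Q where "Q p = frac (- (\<Sum>i=1..n. p i))" for p :: "nat \<Rightarrow> real"
  have A1: "AE p in PiM {1..n+1} (\<lambda>_. U). \<forall>i\<in>{1..n+1}. p i \<in> {0<..<1}"
  proof (rule AE_finite_allI, simp)
    fix i assume i: "i \<in> {1..n+1}"
    have "AE x in U. x \<in> {0<..<1}" by (rule AE_uniform_measureI) auto
    thus "AE p in PiM {1..n+1} (\<lambda>_. U). p i \<in> {0<..<1}"
      by (rule AE_PiM_component[where M="\<lambda>_. U", OF U_prob i])
  qed
  have A2: "AE p in PiM {1..n+1} (\<lambda>_. U). \<forall>i\<in>{1..n+1}. \<forall>j\<in>{1..n+1}. i \<noteq> j \<longrightarrow> p i \<noteq> p j"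
  proof (rule AE_finite_allI, simp)
    fix i assume i: "i \<in> {1..n+1}"
    show "AE p in PiM {1..n+1} (\<lambda>_. U). \<forall>j\<in>{1..n+1}. i \<noteq> j \<longrightarrow> p i \<noteq> p j"
    proof (rule AE_finite_allI, simp)
      fix j assume j: "j \<in> {1..n+1}"
      show "AE p in PiM {1..n+1} (\<lambda>_. U). i \<noteq> j \<longrightarrow> p i \<noteq> p j"
      proof (cases "i = j")
        case True thus ?thesis by simp
      next
        case False
        have "AE p in PiM {1..n+1} (\<lambda>_. U). p i \<noteq> p j"
          by (rule null_coord[where g="\<lambda>p. p j"]) (use i j False in auto)
        thus ?thesis by auto
      qed
    qed
  qed
  have A3: "AE p in PiM {1..n+1} (\<lambda>_. U). p (n+1) \<noteq> Q p"
  proof (rule null_coord)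
    show "Q \<in> borel_measurable (PiM {1..n+1} (\<lambda>_. U))" unfolding Q_def by measurable
    fix x :: "nat \<Rightarrow> real" and y
    show "Q (x(n+1 := y)) = Q x" unfolding Q_def
      by (intro arg_cong[where f=frac] arg_cong[where f=uminus] sum.cong) auto
  qed auto
  have "AE p in PiM {1..n+1} (\<lambda>_. U).
          measure lborel {x\<in>{0..1}. G 0 1 (p ` {1..n+1}) x \<noteq> G 0 1 (p ` {1..n}) x} =
          (if p (n+1) < frac (- (\<Sum>i=1..n. p i)) then frac (- (\<Sum>i=1..n. p i)) else 1 - frac (- (\<Sum>i=1..n. p i)))"
    using A1 A2 A3
  proof eventually_elim
    case (elim p)
    have inj: "inj_on p {1..n+1}" using elim(2) by (auto simp: inj_on_def)
    have ne: "p (n+1) \<noteq> frac (- (\<Sum>i=1..n. p i))" using elim(3) unfolding Q_def .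
    have E: "{x\<in>{0..1}. G 0 1 (p ` {1..n+1}) x \<noteq> G 0 1 (p ` {1..n}) x} =
           (if p (n+1) < frac (- (\<Sum>i=1..n. p i)) then {0<..<frac (- (\<Sum>i=1..n. p i))}
            else {frac (- (\<Sum>i=1..n. p i))<..<1})"
      by (rule part1[OF elim(1) inj ne])
    have q01: "frac (- (\<Sum>i=1..n. p i)) \<in> {0..<1}" by (simp add: frac_lt_1)
    show ?case unfolding E using q01 by auto
  qed
  thus "distributed (completion (PiM {1..n+1} (\<lambda>_. uniform_measure lborel {0<..<(1::real)})))
           lborel
           (\<lambda>p. measure lborel {x\<in>{0..1}. G 0 1 (p ` {1..n+1}) x \<noteq> G 0 1 (p ` {1..n}) x})
           (\<lambda>x. ennreal (2 * x) * indicator {0..1} x)"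
    by (rule final_dist[OF assms])
qed

end
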